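(* Let $\mathbf p$ and $\mathbf q$ be two multi-line queues with the same number $r$ of rows that are identical except that site $j_0$ of the last queue (row $r$) is terminal in $\mathbf p$ and non-terminal in $\mathbf q$. Then: (a) $w(\mathbf q)=w(\mathbf p)^{j_0\to}$; (b) if, starting from site $j_0$ in $w(\mathbf p)$ and going cyclically to the right, the first entry equal to the maximal particle size $r$ comes before any entry $\infty$, then $[\mathbf q]=t_k[\mathbf p]$, where $k=w(\mathbf p)_{j_0}$ is the size of the particle at site $j_0$ in $w(\mathbf p)$.
   Context: Fix a positive integer $n$; sites $1,\dots,n$ are arranged cyclically. A word is $w=w_1\cdots w_n\in\{1,2,\dots,\infty\}^n$; finite entries are particles, entries $\infty$ are empty sites. A type is a tuple $\mathbf m=(m_1,\dots,m_r)$ of positive integers with $m_1+\dots+m_r\le n$; a word has type $\mathbf m$ if it has exactly $m_i$ entries $i$ and all other entries $\infty$. Queues: a queue of capacity $c$ is a choice of $c$ of the $n$ sites, called terminal. Given an input word $x$ whose finite entries lie in $\{1,\dots,i-1\}$, replace each $\infty$ by $i$; then the $n$ particles enter the queue one at a time in an order in which smaller particles come before larger ones (ties arbitrary). A particle at site $j$ first visits site $j$, then $j+1,j+2,\dots$ cyclically, stopping at (and occupying) the first terminal site not yet occupied; if all terminal sites are occupied it visits every site and is discarded. The output $q(x)$ has at each terminal site the size of the particle occupying it and $\infty$ at each non-terminal site. For each size $s$ let $\alpha_s$ be the number of non-terminal sites whose first visitor has size $s$; the weight of $q$ with respect to $x$ is $\prod_s t_s^{\alpha_s}$. Multi-line queues: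 a multi-line queue of type $(m_1,\dots,m_r)$ is a sequence $(q_1,\dots,q_r)$ of queues with $q_i$ of capacity $m_1+\dots+m_i$. Feed $q_1$ the all-$\infty$ word and $q_{i}$ the output of $q_{i-1}$; the output word is $w(\mathbf q)=(q_r\circ\cdots\circ q_1)(\infty\cdots\infty)$. The weight $[\mathbf q]$ is the product over $i$ of the weight of $q_i$ with respect to its input. (Thus $\mathbf p$ and $\mathbf q$ above have types differing only in the last coordinate, by one.) Jumping operation: for a word $x$ and an index $j_0$ with $x_{j_0}\neq\infty$, define the jumping sequence $j_1,\dots,j_s$ recursively: $j_k$ is the first position cyclically to the right of $j_{k-1}$ such that $x_{j_k}$ is finite and strictly larger than $x_{j_{k-1}}$; if no such position exists the sequence stops and $s=k-1$. Define $y=x^{j_0\to}$ by $y_{j_k}=x_{j_{k-1}}$ for $1\le k\le s$, $y_{j_0}=\infty$, and $y_j=x_j$ at all other positions. *)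

theory Defs
  imports Main "HOL-Library.Extended_Nat" "HOL-Library.Product_Lexorder"
begin

(* Sites are 0,...,n-1 (paper: 1,...,n), arranged cyclically.
   Words are lists of length n over enat; \<infinity> = empty site. *)

(* size of the particle at site j when the input word x enters queue of row i
   (entries \<infinity> are replaced by i) *)
definition psize :: "enat list \<Rightarrow> nat \<Rightarrow> nat \<Rightarrow> nat" where
  "psize x i j = (case x ! j of enat v \<Rightarrow> v | \<infinity> \<Rightarrow> i)"

(* order in which particles enter: smaller particles first; ties broken by site
   (the paper allows arbitrary tie-breaking) *)
definition entry_order :: "nat \<Rightarrow> enat list \<Rightarrow> nat \<Rightarrow> nat list" where
  "entry_order n x i = sort_key (\<lambda>j. (psize x i j, j)) [0..<n]"

definition free_dists :: "nat \<Rightarrow> nat set \<Rightarrow> (nat \<Rightarrow> enat) \<Rightarrow> nat \<Rightarrow> nat set" where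
  "free_dists n T occ j = {d. d < n \<and> (j + d) mod n \<in> T \<and> occ ((j + d) mod n) = \<infinity>}"

(* one particle of size s starting at site j enters the queue;
   state = (occupation of sites, size of first visitor of sites), \<infinity> = none *)
definition qstep :: "nat \<Rightarrow> nat set \<Rightarrow> nat \<Rightarrow> nat \<Rightarrow>
    (nat \<Rightarrow> enat) \<times> (nat \<Rightarrow> enat) \<Rightarrow> (nat \<Rightarrow> enat) \<times> (nat \<Rightarrow> enat)" where
  "qstep n T s j st =
     (let occ = fst st; fv = snd st; F = free_dists n T occ j;
          lastd = (if F = {} then n - 1 else Min F);
          fv' = (\<lambda>p. if fv p = \<infinity> \<and> (\<exists>d\<le>lastd. p = (j + d) mod n) then enat s else fv p);
          occ' = (if F = {} then occ else occ((j + Min F) mod n := enat s))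
      in (occ', fv'))"

definition queue_state :: "nat \<Rightarrow> nat set \<Rightarrow> nat \<Rightarrow> enat list \<Rightarrow>
    (nat \<Rightarrow> enat) \<times> (nat \<Rightarrow> enat)" where
  "queue_state n T i x =
     foldl (\<lambda>st j. qstep n T (psize x i j) j st) (\<lambda>_. \<infinity>, \<lambda>_. \<infinity>) (entry_order n x i)"

definition queue_out :: "nat \<Rightarrow> nat set \<Rightarrow> nat \<Rightarrow> enat list \<Rightarrow> enat list" where
  "queue_out n T i x = map (\<lambda>p. if p \<in> T then fst (queue_state n T i x) p else \<infinity>) [0..<n]"

(* weight of q with respect to x: prod over non-terminal sites of t_(size of first visitor),
   i.e. prod_s t_s^alpha_s *)
definition queue_weight :: "nat \<Rightarrow> nat set \<Rightarrow> nat \<Rightarrow> enat list \<Rightarrow> (nat \<Rightarrow> 'a::comm_monoid_mult) \<Rightarrow> 'a" where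
  "queue_weight n T i x t =
     (\<Prod>p\<in>{p. p < n \<and> p \<notin> T}. t (the_enat (snd (queue_state n T i x) p)))"

(* Ts = [T_1,...,T_r] (terminal sets of the rows) is a multi-line queue of type m *)
definition is_mlq :: "nat \<Rightarrow> nat list \<Rightarrow> nat set list \<Rightarrow> bool" where
  "is_mlq n m Ts \<longleftrightarrow> length m = length Ts \<and> (\<forall>k<length m. 0 < m ! k) \<and> sum_list m \<le> n \<and>
     (\<forall>i<length Ts. Ts ! i \<subseteq> {..<n} \<and> card (Ts ! i) = sum_list (take (Suc i) m))"

(* word after the first k rows: (q_k o ... o q_1)(\<infinity>...\<infinity>), row number i+1 for Ts!i *)
definition mlq_input :: "nat \<Rightarrow> nat set list \<Rightarrow> nat \<Rightarrow> enat list" where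
  "mlq_input n Ts k =
     foldl (\<lambda>x (i, T). queue_out n T i x) (replicate n \<infinity>) (zip [1..<Suc k] (take k Ts))"

definition mlq_word :: "nat \<Rightarrow> nat set list \<Rightarrow> enat list" where
  "mlq_word n Ts = mlq_input n Ts (length Ts)"

definition mlq_weight :: "nat \<Rightarrow> nat set list \<Rightarrow> (nat \<Rightarrow> 'a::comm_monoid_mult) \<Rightarrow> 'a" where
  "mlq_weight n Ts t = (\<Prod>i<length Ts. queue_weight n (Ts ! i) (Suc i) (mlq_input n Ts i) t)"

definition next_jump :: "enat list \<Rightarrow> nat \<Rightarrow> nat option" where
  "next_jump x j =
     (let n = length x;
          P = (\<lambda>d. 0 < d \<and> d < n \<and> x ! ((j + d) mod n) \<noteq> \<infinity> \<and> x ! ((j + d) mod n) > x ! j)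
      in if \<exists>d. P d then Some ((j + (LEAST d. P d)) mod n) else None)"

primrec jump_seq :: "enat list \<Rightarrow> nat \<Rightarrow> nat \<Rightarrow> nat option" where
  "jump_seq x j0 0 = Some j0"
| "jump_seq x j0 (Suc k) = Option.bind (jump_seq x j0 k) (next_jump x)"

definition jump :: "enat list \<Rightarrow> nat \<Rightarrow> enat list" where
  "jump x j0 = map (\<lambda>p. if p = j0 then \<infinity>
       else if \<exists>k. jump_seq x j0 (Suc k) = Some p
         then x ! the (jump_seq x j0 (SOME k. jump_seq x j0 (Suc k) = Some p))
         else x ! p) [0..<length x]"

end

theory Submission
  imports Defs
begin

definition cd :: "nat \<Rightarrow> nat \<Rightarrow> nat \<Rightarrow> nat" where
  "cd n a p = (p + n - a) mod n"

lemma cd_lt: "0 < n \<Longrightarrow> cd n a p < n"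
  by (simp add: cd_def)

lemma cd_inv: "a < n \<Longrightarrow> p < n \<Longrightarrow> (a + cd n a p) mod n = p"
proof -
  assume a: "a < n" "p < n"
  have "(a + cd n a p) mod n = (a + (p + n - a)) mod n" unfolding cd_def by (simp add: mod_add_right_eq)
  also have "a + (p + n - a) = p + n" using a by simp
  finally show ?thesis using a by simp
qed

lemma cd_of: "a < n \<Longrightarrow> d < n \<Longrightarrow> cd n a ((a + d) mod n) = d"
proof -
  assume a: "a < n" "d < n"
  have "cd n a ((a + d) mod n) = ((a + d) mod n + (n - a)) mod n" unfolding cd_def using a
    by (metis Nat.add_diff_assoc less_imp_le_nat)
  also have "\<dots> = (a + d + (n - a)) mod n" by (simp add: mod_add_left_eq)
  also have "a + d + (n - a) = d + n" using a by simp
  finally show ?thesis using a by simp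
qed

lemma cd_self: "a < n \<Longrightarrow> cd n a a = 0"
  by (simp add: cd_def)

lemma cd_inj: "a < n \<Longrightarrow> p < n \<Longrightarrow> q < n \<Longrightarrow> cd n a p = cd n a q \<Longrightarrow> p = q"
  by (metis cd_inv)

lemma cd_zero_iff: "a < n \<Longrightarrow> p < n \<Longrightarrow> cd n a p = 0 \<longleftrightarrow> p = a"
  by (metis cd_inj cd_self)

lemma cd_add2: assumes "a < n" "b < n" "p < n" "cd n a b + cd n b p < n"
  shows "cd n a p = cd n a b + cd n b p"
proof -
  have "(a + (cd n a b + cd n b p)) mod n = ((a + cd n a b) mod n + cd n b p) mod n"
    by (simp add: mod_add_left_eq add.assoc)
  also have "\<dots> = p" using assms by (simp add: cd_inv)
  finally have "p = (a + (cd n a b + cd n b p)) mod n" by simp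
  then show ?thesis using cd_of[OF assms(1) assms(4)] by simp
qed

lemma cd_add: assumes "a < n" "b < n" "p < n" "cd n a b \<le> cd n a p"
  shows "cd n a p = cd n a b + cd n b p"
proof -
  have n0: "0 < n" using assms by auto
  define e where "e = cd n a p - cd n a b"
  have e: "e < n" using cd_lt[OF n0, of a p] e_def by auto
  have "(b + e) mod n = ((a + cd n a b) mod n + e) mod n" using assms cd_inv by simp
  also have "\<dots> = (a + (cd n a b + e)) mod n" by (simp add: mod_add_left_eq add.assoc)
  also have "\<dots> = p" using assms e_def cd_inv by simp
  finally have "cd n b p = e" using cd_of[OF assms(2) e] by simp
  then show ?thesis using e_def assms by simp
qed

definition firstp :: "nat \<Rightarrow> nat set \<Rightarrow> nat \<Rightarrow> nat option" where
  "firstp n S a = (if \<exists>p\<in>S. p < n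
     then Some (THE p. p < n \<and> p \<in> S \<and> (\<forall>q\<in>S. q < n \<longrightarrow> cd n a p \<le> cd n a q)) else None)"

lemma firstp_ex1:
  assumes "a < n" "p0 \<in> S" "p0 < n"
  shows "\<exists>!p. p < n \<and> p \<in> S \<and> (\<forall>q\<in>S. q < n \<longrightarrow> cd n a p \<le> cd n a q)"
proof -
  let ?D = "cd n a ` {p\<in>S. p < n}"
  have fin: "finite ?D" by simp
  have ne: "?D \<noteq> {}" using assms by auto
  obtain p where p: "p \<in> S" "p < n" "cd n a p = Min ?D"
    using Min_in[OF fin ne] by auto
  have "\<forall>q\<in>S. q < n \<longrightarrow> cd n a p \<le> cd n a q"
    using p fin by auto
  then have ex: "\<exists>p. p < n \<and> p \<in> S \<and> (\<forall>q\<in>S. q < n \<longrightarrow> cd n a p \<le> cd n a q)"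
    using p by blast
  show ?thesis
  proof (rule ex_ex1I[OF ex])
    fix p q assume "p < n \<and> p \<in> S \<and> (\<forall>q\<in>S. q < n \<longrightarrow> cd n a p \<le> cd n a q)"
      "q < n \<and> q \<in> S \<and> (\<forall>qa\<in>S. qa < n \<longrightarrow> cd n a q \<le> cd n a qa)"
    then have "cd n a p = cd n a q" "p < n" "q < n" by (auto intro: antisym)
    then show "p = q" using cd_inj assms(1) by blast
  qed
qed

lemma firstp_SomeD:
  assumes "firstp n S a = Some p" "a < n"
  shows "p < n \<and> p \<in> S \<and> (\<forall>q\<in>S. q < n \<longrightarrow> cd n a p \<le> cd n a q)"
proof -
  from assms(1) have ex: "\<exists>p\<in>S. p < n" by (auto simp: firstp_def split: if_splits)
  then obtain p0 where "p0 \<in> S" "p0 < n" by auto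
  from firstp_ex1[OF assms(2) this] have e1: "\<exists>!p. p < n \<and> p \<in> S \<and> (\<forall>q\<in>S. q < n \<longrightarrow> cd n a p \<le> cd n a q)" .
  from assms(1) ex have "p = (THE p. p < n \<and> p \<in> S \<and> (\<forall>q\<in>S. q < n \<longrightarrow> cd n a p \<le> cd n a q))"
    by (auto simp: firstp_def)
  then show ?thesis using theI'[OF e1] by simp
qed

lemma firstp_SomeI:
  assumes "a < n" "p < n" "p \<in> S" "\<forall>q\<in>S. q < n \<longrightarrow> cd n a p \<le> cd n a q"
  shows "firstp n S a = Some p"
proof -
  have ex: "\<exists>p\<in>S. p < n" using assms by auto
  from firstp_ex1[OF assms(1) assms(3) assms(2)] assms
  have "(THE p. p < n \<and> p \<in> S \<and> (\<forall>q\<in>S. q < n \<longrightarrow> cd n a p \<le> cd n a q)) = p"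
    by (intro the1_equality) auto
  then show ?thesis using ex by (simp add: firstp_def)
qed

lemma firstp_None: "firstp n S a = None \<longleftrightarrow> (\<forall>p\<in>S. \<not> p < n)"
  by (auto simp: firstp_def)

lemma firstp_Some_iff:
  assumes "a < n"
  shows "firstp n S a = Some p \<longleftrightarrow> (p < n \<and> p \<in> S \<and> (\<forall>q\<in>S. q < n \<longrightarrow> cd n a p \<le> cd n a q))"
  using firstp_SomeD[OF _ assms] firstp_SomeI[OF assms] by blast

lemma firstp_shift:
  assumes "a < n" "b < n" "\<forall>q\<in>S. q < n \<longrightarrow> cd n a b \<le> cd n a q"
  shows "firstp n S a = firstp n S b"
proof (cases "firstp n S a")
  case None
  then show ?thesis by (metis firstp_None)
next
  case (Some p)
  from firstp_SomeD[OF Some assms(1)] have p: "p < n" "p \<in> S" "\<forall>q\<in>S. q < n \<longrightarrow> cd n a p \<le> cd n a q"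
    by auto
  have "\<forall>q\<in>S. q < n \<longrightarrow> cd n b p \<le> cd n b q"
  proof (intro ballI impI)
    fix q assume q: "q \<in> S" "q < n"
    have "cd n a p = cd n a b + cd n b p" using cd_add assms p q by auto
    moreover have "cd n a q = cd n a b + cd n b q" using cd_add assms p q by auto
    ultimately show "cd n b p \<le> cd n b q" using p q by fastforce
  qed
  then have "firstp n S b = Some p" using firstp_SomeI assms p by auto
  then show ?thesis using Some by simp
qed

lemma firstp_sub:
  assumes "a < n" "firstp n S a = Some p" "S' \<subseteq> S" "p \<in> S'"
  shows "firstp n S' a = Some p"
  using firstp_SomeD[OF assms(2,1)] assms by (intro firstp_SomeI) auto

lemma firstp_cong:
  assumes "\<forall>p<n. p \<in> S \<longleftrightarrow> p \<in> S'"
  shows "firstp n S a = firstp n S' a"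
proof -
  have "(\<exists>p\<in>S. p < n) = (\<exists>p\<in>S'. p < n)" using assms by auto
  moreover have "(\<lambda>p. p < n \<and> p \<in> S \<and> (\<forall>q\<in>S. q < n \<longrightarrow> cd n a p \<le> cd n a q)) =
     (\<lambda>p. p < n \<and> p \<in> S' \<and> (\<forall>q\<in>S'. q < n \<longrightarrow> cd n a p \<le> cd n a q))"
    using assms by (intro ext) auto
  ultimately show ?thesis unfolding firstp_def by simp
qed


definition gtset :: "enat list \<Rightarrow> nat \<Rightarrow> nat set" where
  "gtset x j = {q. x ! q \<noteq> \<infinity> \<and> x ! j < x ! q}"

lemma next_jump_firstp:
  assumes "j < length x"
  shows "next_jump x j = firstp (length x) (gtset x j) j"
proof -
  define n where "n = length x"
  define P where "P = (\<lambda>d. 0 < d \<and> d < n \<and> x ! ((j + d) mod n) \<noteq> \<infinity> \<and> x ! ((j + d) mod n) > x ! j)"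
  have nj: "next_jump x j = (if \<exists>d. P d then Some ((j + (LEAST d. P d)) mod n) else None)"
    unfolding next_jump_def P_def n_def Let_def by simp
  have jn: "j < n" using assms n_def by simp
  show ?thesis
  proof (cases "\<exists>d. P d")
    case True
    define d0 where "d0 = (LEAST d. P d)"
    have Pd0: "P d0" using LeastI_ex[OF True] d0_def by simp
    have "firstp n (gtset x j) j = Some ((j + d0) mod n)"
    proof (rule firstp_SomeI[OF jn])
      show "(j + d0) mod n < n" using jn by simp
      show "(j + d0) mod n \<in> gtset x j" using Pd0 by (simp add: P_def gtset_def)
      show "\<forall>q\<in>gtset x j. q < n \<longrightarrow> cd n j ((j + d0) mod n) \<le> cd n j q"
      proof (intro ballI impI)
        fix q assume q: "q \<in> gtset x j" "q < n"
        have qj: "q \<noteq> j" using q by (auto simp: gtset_def)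
        have "P (cd n j q)" unfolding P_def using q qj cd_inv[OF jn q(2)] cd_zero_iff[OF jn q(2)] cd_lt[of n j q] jn
          by (auto simp: gtset_def)
        then have "d0 \<le> cd n j q" unfolding d0_def by (rule Least_le)
        then show "cd n j ((j + d0) mod n) \<le> cd n j q" using cd_of[OF jn] Pd0 P_def by simp
      qed
    qed
    then show ?thesis using nj True d0_def n_def by simp
  next
    case False
    have "\<forall>q\<in>gtset x j. \<not> q < n"
    proof (intro ballI notI)
      fix q assume q: "q \<in> gtset x j" "q < n"
      have qj: "q \<noteq> j" using q by (auto simp: gtset_def)
      have "P (cd n j q)" unfolding P_def using q qj cd_inv[OF jn q(2)] cd_zero_iff[OF jn q(2)] cd_lt[of n j q] jn
        by (auto simp: gtset_def)
      then show False using False by blast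
    qed
    then show ?thesis using nj False firstp_None n_def by metis
  qed
qed

lemma next_jump_SomeD:
  assumes "next_jump x j = Some q" "j < length x"
  shows "q < length x \<and> x ! q \<noteq> \<infinity> \<and> x ! j < x ! q"
  using firstp_SomeD[OF assms(1)[unfolded next_jump_firstp[OF assms(2)]] assms(2)]
  by (auto simp: gtset_def)

lemma jump_seq_lt: "jump_seq x j k = Some c \<Longrightarrow> j < length x \<Longrightarrow> c < length x"
proof (induction k arbitrary: c)
  case 0 then show ?case by simp
next
  case (Suc k)
  then obtain c' where c': "jump_seq x j k = Some c'" "next_jump x c' = Some c"
    by (cases "jump_seq x j k") auto
  then show ?case using Suc next_jump_SomeD by blast
qed

lemma jump_seq_shift:
  assumes "next_jump x j0 = Some j1"
  shows "jump_seq x j0 (Suc k) = jump_seq x j1 k"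
  by (induction k) (use assms in auto)

lemma jump_seq_SucD:
  assumes "jump_seq x j (Suc k) = Some c"
  obtains c' where "jump_seq x j k = Some c'" "next_jump x c' = Some c"
  using assms by (cases "jump_seq x j k") auto

lemma jump_seq_mono:
  assumes "j < length x" "jump_seq x j b = Some c" "a \<le> b" "jump_seq x j a = Some p"
  shows "x ! p \<le> x ! c \<and> (a < b \<longrightarrow> x ! p < x ! c)"
  using assms(2,3,4)
proof (induction b arbitrary: c)
  case 0 then show ?case by simp
next
  case (Suc b)
  obtain c' where c': "jump_seq x j b = Some c'" "next_jump x c' = Some c"
    using jump_seq_SucD[OF Suc.prems(1)] by blast
  have c'l: "c' < length x" using jump_seq_lt[OF c'(1) assms(1)] .
  have lt: "x ! c' < x ! c" using next_jump_SomeD[OF c'(2) c'l] by simp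
  show ?case
  proof (cases "a = Suc b")
    case True then show ?thesis using Suc.prems by simp
  next
    case False
    then have "a \<le> b" using Suc.prems by simp
    then have "x ! p \<le> x ! c'" using Suc.IH[OF c'(1) _ Suc.prems(3)] by simp
    then show ?thesis using lt by (meson le_less_trans less_imp_le)
  qed
qed

lemma jump_seq_inj:
  assumes "j < length x" "jump_seq x j a = Some p" "jump_seq x j b = Some q" "x ! p = x ! q"
  shows "a = b"
proof (rule ccontr)
  assume "a \<noteq> b"
  then consider "a < b" | "b < a" by linarith
  then show False
  proof cases
    case 1 then show False using jump_seq_mono[OF assms(1) assms(3) _ assms(2)] assms(4) by simp
  next
    case 2 then show False using jump_seq_mono[OF assms(1) assms(2) _ assms(3)] assms(4) by simp
  qed
qed

lemma jump_seq_inj': 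
  assumes "j < length x" "jump_seq x j a = Some p" "jump_seq x j b = Some p"
  shows "a = b"
  using jump_seq_inj[OF assms] by simp

lemma jump_len[simp]: "length (jump x j0) = length x"
  by (simp add: jump_def)

lemma jump_nth: "p < length x \<Longrightarrow> jump x j0 ! p = (if p = j0 then \<infinity>
       else if \<exists>k. jump_seq x j0 (Suc k) = Some p
         then x ! the (jump_seq x j0 (SOME k. jump_seq x j0 (Suc k) = Some p))
         else x ! p)"
  by (simp add: jump_def)

lemma jump_none:
  assumes "j0 < length x" "next_jump x j0 = None"
  shows "jump x j0 = x[j0 := \<infinity>]"
proof -
  have "\<And>k. jump_seq x j0 (Suc k) = None"
  proof -
    fix k show "jump_seq x j0 (Suc k) = None"
      by (induction k) (use assms in auto)
  qed
  then show ?thesis by (intro nth_equalityI) (auto simp: jump_nth nth_list_update)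
qed

lemma jump_step:
  assumes "j0 < length x" "next_jump x j0 = Some j1"
  shows "jump x j0 = (jump x j1)[j1 := x ! j0, j0 := \<infinity>]"
proof -
  have j1: "j1 < length x" "x ! j0 < x ! j1" using next_jump_SomeD[OF assms(2,1)] by auto
  have j01: "j0 \<noteq> j1" using j1 by auto
  have sh: "\<And>k. jump_seq x j0 (Suc k) = jump_seq x j1 k" using jump_seq_shift[OF assms(2)] .
  show ?thesis
  proof (rule nth_equalityI)
    show "length (jump x j0) = length ((jump x j1)[j1 := x ! j0, j0 := \<infinity>])" by simp
  next
    fix p assume "p < length (jump x j0)"
    then have p: "p < length x" by simp
    show "jump x j0 ! p = (jump x j1)[j1 := x ! j0, j0 := \<infinity>] ! p"
    proof (cases "p = j0")
      case True then show ?thesis using p by (simp add: jump_nth)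
    next
      case pj0: False
      show ?thesis
      proof (cases "p = j1")
        case True
        have ex: "jump_seq x j0 (Suc 0) = Some j1" using assms by simp
        have "(SOME k. jump_seq x j0 (Suc k) = Some j1) = 0"
        proof (rule some_equality)
          show "jump_seq x j0 (Suc 0) = Some j1" by (rule ex)
          fix k assume "jump_seq x j0 (Suc k) = Some j1"
          then have "Suc k = Suc 0" using jump_seq_inj'[OF assms(1) _ ex] by blast
          then show "k = 0" by simp
        qed
        then show ?thesis using True pj0 p ex j01 by (auto simp: jump_nth jump_seq.simps(1) simp del: jump_seq.simps(2))
      next
        case pj1: False
        show ?thesis
        proof (cases "\<exists>k. jump_seq x j1 (Suc k) = Some p")
          case True
          define k1 where "k1 = (SOME k. jump_seq x j1 (Suc k) = Some p)"
          have k1: "jump_seq x j1 (Suc k1) = Some p" using someI_ex[OF True] k1_def by simp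
          have k0: "jump_seq x j0 (Suc (Suc k1)) = Some p" using k1 sh by simp
          have "(SOME k. jump_seq x j0 (Suc k) = Some p) = Suc k1"
          proof (rule some_equality)
            show "jump_seq x j0 (Suc (Suc k1)) = Some p" by (rule k0)
            fix k assume "jump_seq x j0 (Suc k) = Some p"
            then have "Suc k = Suc (Suc k1)" using jump_seq_inj'[OF assms(1) _ k0] by blast
            then show "k = Suc k1" by simp
          qed
          then have "jump x j0 ! p = x ! the (jump_seq x j1 k1)"
            using p pj0 k0 sh by (auto simp: jump_nth jump_seq.simps(1) simp del: jump_seq.simps(2))
          moreover have "jump x j1 ! p = x ! the (jump_seq x j1 k1)"
            using p pj1 True k1_def by (auto simp: jump_nth jump_seq.simps(1) simp del: jump_seq.simps(2))
          ultimately show ?thesis using pj0 pj1 p by simp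
        next
          case False
          have "\<not> (\<exists>k. jump_seq x j0 (Suc k) = Some p)"
          proof
            assume "\<exists>k. jump_seq x j0 (Suc k) = Some p"
            then obtain k where "jump_seq x j1 k = Some p" using sh by auto
            then show False using False pj1 by (cases k) auto
          qed
          then show ?thesis using False p pj0 pj1 by (auto simp: jump_nth jump_seq.simps(1) simp del: jump_seq.simps(2))
        qed
      qed
    qed
  qed
qed


definition vals :: "nat \<Rightarrow> nat \<Rightarrow> enat list \<Rightarrow> bool" where
  "vals M s w \<longleftrightarrow> (\<forall>p<length w. w ! p = \<infinity> \<or> w ! p = enat M \<or> (\<exists>v. w ! p = enat v \<and> v \<le> s))"

definition upd :: "nat \<Rightarrow> nat \<Rightarrow> nat \<Rightarrow> enat list \<Rightarrow> enat list" where
  "upd M s j w = (case firstp (length w) {p. w ! p = enat M} j of None \<Rightarrow> w | Some f \<Rightarrow> w[f := enat s])"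

lemma vals_upd: "vals M s w \<Longrightarrow> v = \<infinity> \<or> v = enat M \<or> (\<exists>v'. v = enat v' \<and> v' \<le> s) \<Longrightarrow> vals M s (w[f := v])"
  unfolding vals_def
  by (metis length_list_update nth_list_update_eq nth_list_update_neq)

lemma vals_le: "vals M s w \<Longrightarrow> s < M \<Longrightarrow> p < length w \<Longrightarrow> w ! p \<le> enat M \<or> w ! p = \<infinity>"
  unfolding vals_def by force

lemma nj_top:
  assumes "vals M s w" "s < M" "g < length w" "w ! g = enat M"
  shows "next_jump w g = None"
proof -
  have "\<forall>q\<in>gtset w g. \<not> q < length w"
  proof (intro ballI notI)
    fix q assume q: "q \<in> gtset w g" "q < length w"
    then have "w ! q \<noteq> \<infinity>" "enat M < w ! q" using assms by (auto simp: gtset_def)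
    then show False using vals_le[OF assms(1,2) q(2)] by auto
  qed
  then show ?thesis using next_jump_firstp[OF assms(3)] firstp_None by metis
qed

lemma jump_start: "j0 < length w \<Longrightarrow> jump w j0 ! j0 = \<infinity>"
  by (simp add: jump_nth)

lemma jump_changed:
  assumes "p < length w" "jump w j0 ! p \<noteq> w ! p"
  shows "p = j0 \<or> (\<exists>k. jump_seq w j0 (Suc k) = Some p)"
  using assms by (auto simp: jump_nth split: if_splits)

lemma jump_M:
  assumes "vals M s w" "s < M" "j0 < length w" "p < length w" "jump w j0 ! p = enat M"
  shows "w ! p = enat M"
proof (rule ccontr)
  assume ne: "w ! p \<noteq> enat M"
  then have ch: "jump w j0 ! p \<noteq> w ! p" using assms(5) by simp
  have pj0: "p \<noteq> j0" using assms(5) jump_start[OF assms(3)] by auto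
  then have ex: "\<exists>k. jump_seq w j0 (Suc k) = Some p" using jump_changed[OF assms(4) ch] by simp
  define k where "k = (SOME k. jump_seq w j0 (Suc k) = Some p)"
  have k: "jump_seq w j0 (Suc k) = Some p" using someI_ex[OF ex] k_def by simp
  obtain c where c: "jump_seq w j0 k = Some c" "next_jump w c = Some p" using jump_seq_SucD[OF k] by blast
  have cl: "c < length w" using jump_seq_lt[OF c(1) assms(3)] .
  have lt: "w ! c < w ! p" "w ! p \<noteq> \<infinity>" using next_jump_SomeD[OF c(2) cl] by auto
  have "jump w j0 ! p = w ! c" using assms(4) pj0 ex k_def c(1) by (simp add: jump_nth del: jump_seq.simps)
  then have "w ! c = enat M" using assms(5) by simp
  then show False using lt vals_le[OF assms(1,2,4)] by auto
qed

lemma Mset_jump_sub: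
  assumes "vals M s w" "s < M" "j0 < length w"
  shows "{p. p < length w \<and> jump w j0 ! p = enat M} \<subseteq> {p. w ! p = enat M}"
  using jump_M[OF assms] by auto

lemma jump_upd:
  assumes "length w = n" "s < M" "vals M s w" "j < n" "j0 < n" "w ! j0 \<noteq> \<infinity>"
  shows "jump (upd M s j w) j0 = upd M s j (jump w j0)"
  using assms(5,6)
proof (induction j0 rule: measure_induct_rule[where f="\<lambda>j0. M - the_enat (w ! j0)"])
  case (less j0)
  note j0n = less.prems(1)
  define MS where "MS = {p. w ! p = enat M}"
  have vall: "\<forall>p<length w. w ! p = \<infinity> \<or> w ! p = enat M \<or> (\<exists>v. w ! p = enat v \<and> v \<le> s)"
    using assms(3) unfolding vals_def .
  have val0: "w ! j0 = \<infinity> \<or> w ! j0 = enat M \<or> (\<exists>v. w ! j0 = enat v \<and> v \<le> s)"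
    using vall[rule_format, of j0] j0n assms(1) by blast
  have val: "w ! j0 = enat M \<or> (\<exists>v. w ! j0 = enat v \<and> v \<le> s)"
    using val0 less.prems(2) by blast
  have updw: "upd M s j w = (case firstp n MS j of None \<Rightarrow> w | Some f \<Rightarrow> w[f := enat s])"
    by (simp add: upd_def MS_def assms(1))
  show ?case
  proof (cases "w ! j0 = enat M")
    case wM: True
    have nj: "next_jump w j0 = None" using nj_top[OF assms(3,2)] wM j0n assms(1) by simp
    have jw: "jump w j0 = w[j0 := \<infinity>]" using jump_none[OF _ nj] j0n assms(1) by simp
    have MS': "{p. w[j0 := \<infinity>] ! p = enat M} = MS - {j0}" using j0n assms(1) by (auto simp: MS_def nth_list_update)
    have rhs: "upd M s j (jump w j0) = (case firstp n (MS - {j0}) j of None \<Rightarrow> w[j0 := \<infinity>] | Some f \<Rightarrow> w[j0 := \<infinity>, f := enat s])"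
      by (simp add: jw upd_def MS' assms(1))
    obtain f where F: "firstp n MS j = Some f"
      using firstp_None[of n MS j] wM j0n by (cases "firstp n MS j") (auto simp: MS_def)
    have f: "f < n" "f \<in> MS" "\<forall>q\<in>MS. q < n \<longrightarrow> cd n j f \<le> cd n j q"
      using firstp_SomeD[OF F assms(4)] by auto
    show ?thesis
    proof (cases "f = j0")
      case True
      define u where "u = w[j0 := enat s]"
      have uw: "upd M s j w = u" using updw F True u_def by simp
      have vu: "vals M s u" unfolding u_def by (rule vals_upd[OF assms(3)]) simp
      have lu: "length u = n" using u_def assms(1) by simp
      have gt: "\<forall>p<n. p \<in> gtset u j0 \<longleftrightarrow> p \<in> MS - {j0}"
      proof (intro allI impI)
        fix p assume p: "p < n"
        have "u ! j0 = enat s" using u_def j0n assms(1) by simp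
        moreover have "p \<noteq> j0 \<Longrightarrow> u ! p = w ! p" using u_def by simp
        moreover have "w ! p = \<infinity> \<or> w ! p = enat M \<or> (\<exists>v. w ! p = enat v \<and> v \<le> s)"
          using assms(3) p assms(1) unfolding vals_def by simp
        ultimately show "p \<in> gtset u j0 \<longleftrightarrow> p \<in> MS - {j0}"
          unfolding gtset_def MS_def using assms(2) by (cases "p = j0") auto
      qed
      have sh: "firstp n (MS - {j0}) j = firstp n (MS - {j0}) j0"
        using firstp_shift[OF assms(4) j0n] f True by auto
      have nju: "next_jump u j0 = firstp n (MS - {j0}) j0"
        using next_jump_firstp[of j0 u] lu j0n firstp_cong[OF gt] by simp
      show ?thesis
      proof (cases "firstp n (MS - {j0}) j0")
        case None
        then have "jump u j0 = u[j0 := \<infinity>]" using jump_none[of j0 u] nju lu j0n by simp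
        then show ?thesis using uw rhs sh None u_def by simp
      next
        case (Some g)
        have g: "g < n" "g \<in> MS" "g \<noteq> j0" using firstp_SomeD[OF Some j0n] by auto
        have ug: "u ! g = enat M" using g u_def MS_def by simp
        have jg: "jump u g = u[g := \<infinity>]"
          using jump_none[of g u] nj_top[OF vu assms(2)] g lu ug by simp
        have "jump u j0 = (jump u g)[g := u ! j0, j0 := \<infinity>]"
          using jump_step[of j0 u g] nju Some lu j0n by simp
        also have "\<dots> = w[j0 := \<infinity>, g := enat s]" using jg u_def g j0n assms(1)
          by (simp add: list_update_swap)
        finally show ?thesis using uw rhs sh Some by simp
      qed
    next
      case False
      define u where "u = w[f := enat s]"
      have uw: "upd M s j w = u" using updw F u_def by simp
      have vu: "vals M s u" unfolding u_def by (rule vals_upd[OF assms(3)]) simp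
      have lu: "length u = n" using u_def assms(1) by simp
      have uj0: "u ! j0 = enat M" using u_def False wM by simp
      have "jump u j0 = u[j0 := \<infinity>]"
        using jump_none[of j0 u] nj_top[OF vu assms(2)] j0n lu uj0 by simp
      moreover have "firstp n (MS - {j0}) j = Some f"
        using firstp_sub[OF assms(4) F] False f by auto
      ultimately show ?thesis using uw rhs u_def False by (simp add: list_update_swap)
    qed
  next
    case wnM: False
    then obtain v where v: "w ! j0 = enat v" "v \<le> s" using val by auto
    have j0MS: "j0 \<notin> MS" using wnM MS_def by simp
    have MSgt: "\<And>q. q \<in> MS \<Longrightarrow> q \<in> gtset w j0" using v assms(2) by (auto simp: MS_def gtset_def)
    show ?thesis
    proof (cases "next_jump w j0")
      case None
      have jw: "jump w j0 = w[j0 := \<infinity>]" using jump_none[OF _ None] j0n assms(1) by simp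
      have noM: "\<forall>q\<in>MS. \<not> q < n"
        using None next_jump_firstp[of j0 w] j0n assms(1) firstp_None MSgt by (metis)
      then have F: "firstp n MS j = None" using firstp_None by metis
      have MS': "{p. w[j0 := \<infinity>] ! p = enat M} = MS - {j0}" using j0n assms(1) by (auto simp: MS_def nth_list_update)
      have "firstp n (MS - {j0}) j = None" using noM firstp_None by (metis DiffD1)
      then have "upd M s j (jump w j0) = jump w j0" by (simp add: jw upd_def MS' assms(1))
      moreover have "upd M s j w = w" using updw F by simp
      ultimately show ?thesis by simp
    next
      case (Some j1)
      have j1: "j1 < n" "w ! j1 \<noteq> \<infinity>" "w ! j0 < w ! j1"
        using next_jump_SomeD[OF Some] j0n assms(1) by auto
      have j1S: "firstp n (gtset w j0) j0 = Some j1" using Some next_jump_firstp[of j0 w] j0n assms(1) by simp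
      have j1min: "\<forall>q\<in>gtset w j0. q < n \<longrightarrow> cd n j0 j1 \<le> cd n j0 q" using firstp_SomeD[OF j1S j0n] by simp
      have j01: "j0 \<noteq> j1" using j1 by auto
      have jw: "jump w j0 = (jump w j1)[j1 := enat v, j0 := \<infinity>]"
        using jump_step[OF _ Some] j0n assms(1) v by simp
      obtain v1 where v1: "w ! j1 = enat v1" using j1 by auto
      have v1M: "v1 \<le> M" using vals_le[OF assms(3,2), of j1] j1 v1 assms(1) by auto
      have vv1: "v < v1" using j1 v v1 by simp
      have IH: "jump (upd M s j w) j1 = upd M s j (jump w j1)"
        using less.IH[of j1] j1 v v1 v1M vv1 by simp
      show ?thesis
      proof (cases "firstp n MS j = Some j1 \<and> v = s")
        case True
        have wj1: "w ! j1 = enat M" using True firstp_SomeD[of n MS j j1] assms(4) MS_def by auto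
        have jw1: "jump w j1 = w[j1 := \<infinity>]" using jump_none[of j1 w] nj_top[OF assms(3,2)] j1 wj1 assms(1) by simp
        define u where "u = w[j1 := enat s]"
        have uw: "upd M s j w = u" using updw True u_def by simp
        have vu: "vals M s u" unfolding u_def by (rule vals_upd[OF assms(3)]) simp
        have lu: "length u = n" using u_def assms(1) by simp
        have jw': "jump w j0 = u[j0 := \<infinity>]" using jw jw1 u_def True j01 by (simp add: list_update_swap)
        have MS': "{p. u[j0 := \<infinity>] ! p = enat M} = MS - {j1}"
          using j0MS assms(2) j0n j1(1) assms(1) by (auto simp: MS_def u_def nth_list_update)
        have gt: "\<forall>p<n. p \<in> gtset u j0 \<longleftrightarrow> p \<in> MS - {j1}"
        proof (intro allI impI)
          fix p assume p: "p < n"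
          have "u ! j0 = enat s" using u_def j01 v True by simp
          moreover have "p \<noteq> j1 \<Longrightarrow> u ! p = w ! p" using u_def by simp
          moreover have "u ! j1 = enat s" using u_def j1 assms(1) by simp
          moreover have "w ! p = \<infinity> \<or> w ! p = enat M \<or> (\<exists>v. w ! p = enat v \<and> v \<le> s)"
            using assms(3) p assms(1) unfolding vals_def by simp
          ultimately show "p \<in> gtset u j0 \<longleftrightarrow> p \<in> MS - {j1}"
            unfolding gtset_def MS_def using assms(2) by (cases "p = j1") auto
        qed
        have sh1: "firstp n (MS - {j1}) j0 = firstp n (MS - {j1}) j1"
          using firstp_shift[OF j0n j1(1)] j1min MSgt by auto
        have sh2: "firstp n (MS - {j1}) j = firstp n (MS - {j1}) j1"
          using firstp_shift[OF assms(4) j1(1)] firstp_SomeD[of n MS j j1] True assms(4) by auto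
        have nju: "next_jump u j0 = firstp n (MS - {j1}) j1"
          using next_jump_firstp[of j0 u] lu j0n firstp_cong[OF gt] sh1 by simp
        have rhs: "upd M s j (jump w j0) = (case firstp n (MS - {j1}) j1 of None \<Rightarrow> u[j0 := \<infinity>] | Some f \<Rightarrow> u[j0 := \<infinity>, f := enat s])"
          using jw' MS' sh2 lu by (simp add: upd_def)
        show ?thesis
        proof (cases "firstp n (MS - {j1}) j1")
          case None
          then have "jump u j0 = u[j0 := \<infinity>]" using jump_none[of j0 u] nju lu j0n by simp
          then show ?thesis using uw rhs None by simp
        next
          case (Some g)
          have g: "g < n" "g \<in> MS" "g \<noteq> j1" using firstp_SomeD[OF Some j1(1)] by auto
          have gj0: "g \<noteq> j0" using g j0MS by auto
          have ug: "u ! g = enat M" using g u_def MS_def by simp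
          have jg: "jump u g = u[g := \<infinity>]"
            using jump_none[of g u] nj_top[OF vu assms(2)] g lu ug by simp
          have "jump u j0 = (jump u g)[g := u ! j0, j0 := \<infinity>]"
            using jump_step[of j0 u g] nju Some lu j0n by simp
          also have "\<dots> = u[j0 := \<infinity>, g := enat s]" using jg u_def g gj0 j01 v True j0n assms(1)
            by (simp add: list_update_swap)
          finally show ?thesis using uw rhs Some by simp
        qed
      next
        case False
        have nju: "next_jump (upd M s j w) j0 = Some j1"
        proof (cases "firstp n MS j")
          case None then show ?thesis using updw Some by simp
        next
          case (Some f)
          have f: "f < n" "f \<in> MS" using firstp_SomeD[OF Some assms(4)] by auto
          have fj0: "f \<noteq> j0" using f j0MS by auto
          define u where "u = w[f := enat s]"
          have uw: "upd M s j w = u" using updw Some u_def by simp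
          have lu: "length u = n" using u_def assms(1) by simp
          have uj0: "u ! j0 = enat v" using u_def fj0 v by simp
          show ?thesis
          proof (cases "v < s")
            case True
            have gt: "\<forall>p<n. p \<in> gtset u j0 \<longleftrightarrow> p \<in> gtset w j0"
            proof (intro allI impI)
              fix p assume p: "p < n"
              show "p \<in> gtset u j0 \<longleftrightarrow> p \<in> gtset w j0"
              proof (cases "p = f")
                case True then show ?thesis using f u_def uj0 v \<open>v < s\<close> assms(2) assms(1)
                  by (simp add: gtset_def MS_def)
              next
                case False then show ?thesis using u_def uj0 v by (simp add: gtset_def)
              qed
            qed
            then show ?thesis using uw next_jump_firstp[of j0 u] lu j0n firstp_cong[OF gt] j1S by simp
          next
            case False
            then have vs: "v = s" using v by simp
            then have fj1: "f \<noteq> j1" using \<open>\<not> (firstp n MS j = Some j1 \<and> v = s)\<close> Some by auto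
            have sub: "gtset u j0 \<subseteq> gtset w j0"
            proof
              fix x assume x: "x \<in> gtset u j0"
              show "x \<in> gtset w j0"
              proof (cases "x = f")
                case True then show ?thesis using x u_def uj0 vs f assms(1) by (simp add: gtset_def)
              next
                case False then show ?thesis using x u_def uj0 v by (simp add: gtset_def)
              qed
            qed
            have "j1 \<in> gtset u j0" using u_def uj0 fj1 j1 v by (simp add: gtset_def)
            then have "firstp n (gtset u j0) j0 = Some j1" using firstp_sub[OF j0n j1S sub] by simp
            then show ?thesis using uw next_jump_firstp[of j0 u] lu j0n by simp
          qed
        qed
        have uj0: "upd M s j w ! j0 = enat v"
        proof (cases "firstp n MS j")
          case None then show ?thesis using updw v by simp
        next
          case (Some f)
          then have "f \<noteq> j0" using firstp_SomeD[OF Some assms(4)] j0MS by auto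
          then show ?thesis using updw v Some by simp
        qed
        have lupd: "length (upd M s j w) = n" using updw assms(1) by (simp split: option.splits)
        have lhs: "jump (upd M s j w) j0 = (upd M s j (jump w j1))[j1 := enat v, j0 := \<infinity>]"
          using jump_step[OF _ nju] lupd j0n uj0 IH by simp
        define y where "y = jump w j1"
        have ly: "length y = n" using y_def assms(1) by simp
        have yj1: "y ! j1 = \<infinity>" using y_def jump_start j1 assms(1) by simp
        have ysub: "\<And>p. p < n \<Longrightarrow> y ! p = enat M \<Longrightarrow> p \<in> MS"
          using jump_M[OF assms(3,2), of j1] j1 assms(1) y_def MS_def by auto
        have Mcong: "\<forall>p<n. p \<in> {p. y[j1 := enat v, j0 := \<infinity>] ! p = enat M} \<longleftrightarrow> p \<in> {p. y ! p = enat M}"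
        proof (intro allI impI)
          fix p assume p: "p < n"
          show "p \<in> {p. y[j1 := enat v, j0 := \<infinity>] ! p = enat M} \<longleftrightarrow> p \<in> {p. y ! p = enat M}"
          proof (cases "p = j0")
            case True then show ?thesis using ysub j0MS ly j0n by auto
          next
            case False
            then show ?thesis using yj1 v assms(2) ly j1(1) by (cases "p = j1") auto
          qed
        qed
        have updy: "upd M s j y = (case firstp n {p. y ! p = enat M} j of None \<Rightarrow> y | Some f \<Rightarrow> y[f := enat s])"
          using ly by (simp add: upd_def)
        have rhs: "upd M s j (jump w j0) = (case firstp n {p. y ! p = enat M} j of None \<Rightarrow> y[j1 := enat v, j0 := \<infinity>] | Some f \<Rightarrow> y[j1 := enat v, j0 := \<infinity>, f := enat s])"
        proof -
          have jwy: "jump w j0 = y[j1 := enat v, j0 := \<infinity>]" using jw y_def by simp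
          show ?thesis using ly firstp_cong[OF Mcong] unfolding jwy by (simp add: upd_def)
        qed
        show ?thesis
        proof (cases "firstp n {p. y ! p = enat M} j")
          case None then show ?thesis using lhs rhs updy by (simp add: y_def[symmetric])
        next
          case (Some g)
          have g: "g < n" "y ! g = enat M" using firstp_SomeD[OF Some assms(4)] by auto
          have gj0: "g \<noteq> j0" using ysub g j0MS by auto
          have gj1: "g \<noteq> j1" using yj1 g by auto
          have sw: "y[g := enat s, j1 := enat v, j0 := \<infinity>] = y[j1 := enat v, j0 := \<infinity>, g := enat s]"
            using gj0 gj1 by (metis list_update_swap)
          show ?thesis using lhs rhs updy Some sw by (simp add: y_def[symmetric])
        qed
      qed
    qed
  qed
qed


definition freeset :: "nat set \<Rightarrow> (nat \<Rightarrow> enat) \<Rightarrow> nat set" where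
  "freeset T occ = {p. p \<in> T \<and> occ p = \<infinity>}"

lemma free_dists_eq:
  assumes "j < n"
  shows "free_dists n T occ j = {d. d < n \<and> (j + d) mod n \<in> freeset T occ}"
  by (auto simp: free_dists_def freeset_def)

lemma free_dists_empty:
  assumes "j < n"
  shows "free_dists n T occ j = {} \<longleftrightarrow> firstp n (freeset T occ) j = None"
proof -
  have "free_dists n T occ j = {} \<longleftrightarrow> (\<forall>p\<in>freeset T occ. \<not> p < n)"
  proof
    assume e: "free_dists n T occ j = {}"
    show "\<forall>p\<in>freeset T occ. \<not> p < n"
    proof (intro ballI notI)
      fix p assume p: "p \<in> freeset T occ" "p < n"
      then have "cd n j p \<in> free_dists n T occ j"
        using cd_inv[OF assms p(2)] cd_lt[of n j p] assms by (auto simp: free_dists_eq[OF assms])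
      then show False using e by simp
    qed
  next
    assume h: "\<forall>p\<in>freeset T occ. \<not> p < n"
    show "free_dists n T occ j = {}"
      using h assms by (auto simp: free_dists_eq[OF assms])
  qed
  then show ?thesis using firstp_None by metis
qed

lemma free_dists_Min:
  assumes "j < n" "firstp n (freeset T occ) j = Some f"
  shows "Min (free_dists n T occ j) = cd n j f"
proof -
  have f: "f < n" "f \<in> freeset T occ" "\<forall>q\<in>freeset T occ. q < n \<longrightarrow> cd n j f \<le> cd n j q"
    using firstp_SomeD[OF assms(2,1)] by auto
  have fin: "finite (free_dists n T occ j)" by (simp add: free_dists_def)
  have mem: "cd n j f \<in> free_dists n T occ j"
    using f cd_inv[OF assms(1) f(1)] cd_lt[of n j f] assms(1) by (auto simp: free_dists_eq[OF assms(1)])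
  have "\<forall>d\<in>free_dists n T occ j. cd n j f \<le> d"
  proof
    fix d assume d: "d \<in> free_dists n T occ j"
    then have "d < n" "(j + d) mod n \<in> freeset T occ" by (auto simp: free_dists_eq[OF assms(1)])
    then show "cd n j f \<le> d" using f(3) cd_of[OF assms(1)] by (metis mod_less_divisor assms(1) gr_implies_not_zero neq0_conv)
  qed
  then show ?thesis using Min_eqI[OF fin] mem by (metis)
qed

lemma visit_iff:
  assumes "j < n" "l < n"
  shows "(\<exists>d\<le>l. p = (j + d) mod n) \<longleftrightarrow> p < n \<and> cd n j p \<le> l"
proof
  assume "\<exists>d\<le>l. p = (j + d) mod n"
  then obtain d where d: "d \<le> l" "p = (j + d) mod n" by auto
  then show "p < n \<and> cd n j p \<le> l" using cd_of[OF assms(1), of d] assms by auto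
next
  assume "p < n \<and> cd n j p \<le> l"
  then show "\<exists>d\<le>l. p = (j + d) mod n" using cd_inv[OF assms(1)] by (metis)
qed

definition reach :: "nat \<Rightarrow> nat \<Rightarrow> nat option \<Rightarrow> nat \<Rightarrow> bool" where
  "reach n j F p \<longleftrightarrow> p < n \<and> (case F of None \<Rightarrow> True | Some f \<Rightarrow> cd n j p \<le> cd n j f)"

lemma qstep_alt:
  assumes "j < n"
  shows "qstep n T s j st =
    (case firstp n (freeset T (fst st)) j of None \<Rightarrow> fst st | Some f \<Rightarrow> (fst st)(f := enat s),
     \<lambda>p. if snd st p = \<infinity> \<and> reach n j (firstp n (freeset T (fst st)) j) p then enat s else snd st p)"
proof (cases "firstp n (freeset T (fst st)) j")
  case None
  then have e: "free_dists n T (fst st) j = {}" using free_dists_empty[OF assms] by simp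
  have "\<And>p. (\<exists>d\<le>n - 1. p = (j + d) mod n) \<longleftrightarrow> p < n"
  proof -
    fix p
    have "cd n j p < n" using cd_lt[of n j p] assms by simp
    then have "cd n j p \<le> n - 1" by simp
    then show "(\<exists>d\<le>n - 1. p = (j + d) mod n) \<longleftrightarrow> p < n"
      using visit_iff[OF assms, of "n - 1" p] assms by auto
  qed
  then show ?thesis using None e unfolding qstep_def Let_def reach_def by (auto simp: fun_eq_iff)
next
  case (Some f)
  then have e: "free_dists n T (fst st) j \<noteq> {}" using free_dists_empty[OF assms] by simp
  have mn: "Min (free_dists n T (fst st) j) = cd n j f" using free_dists_Min[OF assms Some] .
  have f: "f < n" using firstp_SomeD[OF Some assms] by simp
  have jf: "(j + cd n j f) mod n = f" using cd_inv[OF assms f] .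
  have "\<And>p. (\<exists>d\<le>cd n j f. p = (j + d) mod n) \<longleftrightarrow> p < n \<and> cd n j p \<le> cd n j f"
    using visit_iff[OF assms, of "cd n j f"] cd_lt[of n j f] assms by auto
  then show ?thesis using Some e mn jf unfolding qstep_def Let_def reach_def by (auto simp: fun_eq_iff)
qed


type_synonym st = "(nat \<Rightarrow> enat) \<times> (nat \<Rightarrow> enat)"

definition run :: "nat \<Rightarrow> nat set \<Rightarrow> (nat \<Rightarrow> nat) \<Rightarrow> st \<Rightarrow> nat list \<Rightarrow> st" where
  "run n T sz st0 xs = foldl (\<lambda>st j. qstep n T (sz j) j st) st0 xs"

definition st0 :: st where "st0 = (\<lambda>_. \<infinity>, \<lambda>_. \<infinity>)"

lemma queue_state_run: "queue_state n T i x = run n T (psize x i) st0 (entry_order n x i)"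
  by (simp add: queue_state_def run_def st0_def)


lemma run_snoc: "run n T sz st (xs @ [j]) = qstep n T (sz j) j (run n T sz st xs)"
  by (simp add: run_def)

lemma run_append: "run n T sz st (xs @ ys) = run n T sz (run n T sz st xs) ys"
  by (simp add: run_def)

lemma run_nil: "run n T sz st [] = st" by (simp add: run_def)

lemma run_take_Suc: "k < length xs \<Longrightarrow> run n T sz st (take (Suc k) xs) = qstep n T (sz (xs ! k)) (xs ! k) (run n T sz st (take k xs))"
  by (simp add: take_Suc_conv_app_nth run_snoc)

lemma qstep_Q1:
  assumes "j < n" "fst (qstep n T s j st) p \<noteq> \<infinity>"
  shows "(fst st p \<noteq> \<infinity> \<and> fst (qstep n T s j st) p = fst st p) \<or> (p \<in> T \<and> p < n \<and> fst (qstep n T s j st) p = enat s)"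
proof (cases "firstp n (freeset T (fst st)) j")
  case None then show ?thesis using assms by (simp add: qstep_alt)
next
  case (Some f)
  have "f < n" "f \<in> T" using firstp_SomeD[OF Some assms(1)] by (auto simp: freeset_def)
  then show ?thesis using Some assms by (auto simp: qstep_alt)
qed

lemma qstep_Q2:
  assumes "j < n" "fst st p \<noteq> \<infinity>"
  shows "fst (qstep n T s j st) p = fst st p"
proof (cases "firstp n (freeset T (fst st)) j")
  case None then show ?thesis using assms by (simp add: qstep_alt)
next
  case (Some f)
  have "f \<in> freeset T (fst st)" using firstp_SomeD[OF Some assms(1)] by auto
  then have "f \<noteq> p" using assms by (auto simp: freeset_def)
  then show ?thesis using Some assms by (simp add: qstep_alt)
qed

lemma qstep_Q3:
  assumes "j < n" "snd st p \<noteq> \<infinity>"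
  shows "snd (qstep n T s j st) p = snd st p"
  using assms by (simp add: qstep_alt)

lemma qstep_Q4:
  assumes "j < n"
  shows "snd (qstep n T s j st) j \<noteq> \<infinity>"
  using assms cd_self[OF assms] by (auto simp: qstep_alt reach_def split: option.splits)

lemma qstep_card:
  assumes "j < n" "T \<subseteq> {..<n}"
  shows "card (freeset T (fst (qstep n T s j st))) = card (freeset T (fst st)) - 1"
proof (cases "firstp n (freeset T (fst st)) j")
  case None
  have "freeset T (fst (qstep n T s j st)) = freeset T (fst st)" using None assms by (simp add: qstep_alt)
  moreover have "freeset T (fst st) \<inter> {..<n} = {}" using None firstp_None by auto
  moreover have "freeset T (fst st) \<subseteq> {..<n}" using assms(2) by (auto simp: freeset_def)
  ultimately have "freeset T (fst st) = {}" by blast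
  then show ?thesis using \<open>freeset T (fst (qstep n T s j st)) = freeset T (fst st)\<close> by simp
next
  case (Some f)
  have f: "f \<in> freeset T (fst st)" using firstp_SomeD[OF Some assms(1)] by auto
  have "freeset T (fst (qstep n T s j st)) = freeset T (fst st) - {f}"
    using Some assms by (auto simp: qstep_alt freeset_def)
  moreover have "finite (freeset T (fst st))"
    by (rule finite_subset[of _ "{..<n}"]) (use assms(2) in \<open>auto simp: freeset_def\<close>)
  ultimately show ?thesis using f by simp
qed


lemma run_R1:
  assumes "set xs \<subseteq> {..<n}" "fst (run n T sz st0 xs) p \<noteq> \<infinity>"
  shows "p \<in> T \<and> p < n \<and> (\<exists>j\<in>set xs. fst (run n T sz st0 xs) p = enat (sz j))"
  using assms
proof (induction xs arbitrary: p rule: rev_induct)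
  case Nil then show ?case by (simp add: run_nil st0_def)
next
  case (snoc j xs)
  have j: "j < n" using snoc.prems by auto
  have r: "run n T sz st0 (xs @ [j]) = qstep n T (sz j) j (run n T sz st0 xs)" by (rule run_snoc)
  from qstep_Q1[OF j snoc.prems(2)[unfolded r]]
  show ?case
  proof
    assume h: "fst (run n T sz st0 xs) p \<noteq> \<infinity> \<and> fst (qstep n T (sz j) j (run n T sz st0 xs)) p = fst (run n T sz st0 xs) p"
    then show ?thesis using snoc.IH[of p] snoc.prems(1) r by auto
  next
    assume "p \<in> T \<and> p < n \<and> fst (qstep n T (sz j) j (run n T sz st0 xs)) p = enat (sz j)"
    then show ?thesis using r by auto
  qed
qed

lemma run_R3:
  assumes "set xs \<subseteq> {..<n}" "fst st p \<noteq> \<infinity>"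
  shows "fst (run n T sz st xs) p = fst st p"
  using assms
proof (induction xs rule: rev_induct)
  case Nil then show ?case by (simp add: run_nil)
next
  case (snoc j xs)
  then show ?case using qstep_Q2[of j n "run n T sz st xs" p T "sz j"] by (simp add: run_snoc)
qed

lemma run_R3':
  assumes "set xs \<subseteq> {..<n}" "snd st p \<noteq> \<infinity>"
  shows "snd (run n T sz st xs) p = snd st p"
  using assms
proof (induction xs rule: rev_induct)
  case Nil then show ?case by (simp add: run_nil)
next
  case (snoc j xs)
  then show ?case using qstep_Q3[of j n "run n T sz st xs" p T "sz j"] by (simp add: run_snoc)
qed

lemma run_R2:
  assumes "set xs \<subseteq> {..<n}" "j \<in> set xs"
  shows "snd (run n T sz st xs) j \<noteq> \<infinity>"
  using assms
proof (induction xs rule: rev_induct)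
  case Nil then show ?case by simp
next
  case (snoc a xs)
  have a: "a < n" using snoc.prems by auto
  show ?case
  proof (cases "j \<in> set xs")
    case True
    then have "snd (run n T sz st xs) j \<noteq> \<infinity>" using snoc by auto
    then show ?thesis using qstep_Q3[OF a] by (simp add: run_snoc)
  next
    case False
    then have "j = a" using snoc.prems by auto
    then show ?thesis using qstep_Q4[OF a] by (simp add: run_snoc)
  qed
qed

lemma run_card:
  assumes "set xs \<subseteq> {..<n}" "T \<subseteq> {..<n}"
  shows "card (freeset T (fst (run n T sz st xs))) = card (freeset T (fst st)) - length xs"
  using assms(1)
proof (induction xs rule: rev_induct)
  case Nil then show ?case by (simp add: run_nil)
next
  case (snoc a xs)
  have a: "a < n" using snoc.prems by auto
  show ?case using qstep_card[OF a assms(2)] snoc by (simp add: run_snoc)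
qed

definition Zw :: "nat \<Rightarrow> nat \<Rightarrow> nat set \<Rightarrow> (nat \<Rightarrow> enat) \<Rightarrow> enat list" where
  "Zw n M T occ = map (\<lambda>p. if p \<in> T then (if occ p = \<infinity> then enat M else occ p) else \<infinity>) [0..<n]"

lemma Zw_len[simp]: "length (Zw n M T occ) = n" by (simp add: Zw_def)

lemma Zw_nth: "p < n \<Longrightarrow> Zw n M T occ ! p = (if p \<in> T then (if occ p = \<infinity> then enat M else occ p) else \<infinity>)"
  by (simp add: Zw_def)

lemma Zw_qstep:
  assumes "j < n" "\<forall>p<n. p \<in> T \<longrightarrow> fst st p \<noteq> enat M"
  shows "Zw n M T (fst (qstep n T s j st)) = upd M s j (Zw n M T (fst st))"
proof -
  have cong: "\<forall>p<n. p \<in> {p. Zw n M T (fst st) ! p = enat M} \<longleftrightarrow> p \<in> freeset T (fst st)"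
    using assms(2) by (auto simp: Zw_nth freeset_def)
  have u: "upd M s j (Zw n M T (fst st)) = (case firstp n (freeset T (fst st)) j of None \<Rightarrow> Zw n M T (fst st) | Some f \<Rightarrow> (Zw n M T (fst st))[f := enat s])"
    unfolding upd_def using firstp_cong[OF cong] by simp
  show ?thesis
  proof (cases "firstp n (freeset T (fst st)) j")
    case None then show ?thesis using u assms by (simp add: qstep_alt)
  next
    case (Some f)
    have f: "f < n" "f \<in> T" using firstp_SomeD[OF Some assms(1)] by (auto simp: freeset_def)
    have "Zw n M T ((fst st)(f := enat s)) = (Zw n M T (fst st))[f := enat s]"
      by (rule nth_equalityI) (use f in \<open>auto simp: Zw_nth nth_list_update\<close>)
    then show ?thesis using u Some assms by (simp add: qstep_alt)
  qed
qed


lemma in_take_le: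
  assumes "j \<in> set (take k L)" "\<And>a b. a \<le> b \<Longrightarrow> b < length L \<Longrightarrow> sz (L ! a) \<le> sz (L ! b)" "k < length L"
  shows "sz j \<le> sz (L ! k)"
proof -
  obtain m where m: "m < length (take k L)" "take k L ! m = j" using assms(1) by (auto simp: in_set_conv_nth)
  then have "m < k" "L ! m = j" by auto
  then show ?thesis using assms(2)[of m k] assms(3) by simp
qed

lemma vals_run:
  assumes "set L \<subseteq> {..<n}" "\<And>a b. a \<le> b \<Longrightarrow> b < length L \<Longrightarrow> sz (L ! a) \<le> sz (L ! b)"
    "\<And>j. sz j < M" "k < length L"
  shows "vals M (sz (L ! k)) (Zw n M U (fst (run n U sz st0 (take k L))))
       \<and> (\<forall>p<n. p \<in> U \<longrightarrow> fst (run n U sz st0 (take k L)) p \<noteq> enat M)"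
proof -
  define A where "A = fst (run n U sz st0 (take k L))"
  have sub: "set (take k L) \<subseteq> {..<n}" using assms(1) set_take_subset by fastforce
  have key: "\<And>p. A p \<noteq> \<infinity> \<Longrightarrow> \<exists>v. A p = enat v \<and> v \<le> sz (L ! k)"
  proof -
    fix p assume "A p \<noteq> \<infinity>"
    then obtain j where j: "j \<in> set (take k L)" "A p = enat (sz j)" using run_R1[OF sub] A_def by blast
    then show "\<exists>v. A p = enat v \<and> v \<le> sz (L ! k)" using in_take_le[of j k L sz, OF j(1) assms(2) assms(4)] by auto
  qed
  have "vals M (sz (L ! k)) (Zw n M U A)"
    unfolding vals_def using key by (auto simp: Zw_nth)
  moreover have "\<forall>p<n. p \<in> U \<longrightarrow> A p \<noteq> enat M"
  proof (intro allI impI notI)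
    fix p assume "A p = enat M"
    then show False using key[of p] assms(3)[of "L ! k"] by auto
  qed
  ultimately show ?thesis using A_def by simp
qed

lemma inv_a:
  assumes "j0 < n" "j0 \<in> T" "T \<subseteq> {..<n}" "set L \<subseteq> {..<n}"
    "\<And>a b. a \<le> b \<Longrightarrow> b < length L \<Longrightarrow> sz (L ! a) \<le> sz (L ! b)"
    "\<And>j. sz j < M" "k \<le> length L"
  shows "Zw n M (T - {j0}) (fst (run n (T - {j0}) sz st0 (take k L))) = jump (Zw n M T (fst (run n T sz st0 (take k L)))) j0"
  using assms(7)
proof (induction k)
  case 0
  define B where "B = Zw n M T (\<lambda>_. \<infinity>)"
  have vB: "vals M 0 B" by (auto simp: vals_def B_def Zw_nth)
  have M0: "0 < M" using assms(6)[of 0] by simp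
  have "next_jump B j0 = None" using nj_top[OF vB M0] assms(1,2) by (simp add: B_def Zw_nth)
  then have "jump B j0 = B[j0 := \<infinity>]" using jump_none[of j0 B] assms(1) by (simp add: B_def)
  also have "\<dots> = Zw n M (T - {j0}) (\<lambda>_. \<infinity>)"
  proof (rule nth_equalityI)
    fix i assume "i < length (B[j0 := \<infinity>])"
    then have i: "i < n" by (simp add: B_def)
    show "B[j0 := \<infinity>] ! i = Zw n M (T - {j0}) (\<lambda>_. \<infinity>) ! i"
      using i assms(1) by (cases "i = j0") (auto simp: B_def Zw_nth)
  qed (simp add: B_def)
  finally show ?case by (simp add: B_def run_nil st0_def)
next
  case (Suc k)
  then have k: "k < length L" by simp
  define j where "j = L ! k"
  define s where "s = sz j"
  have jn: "j < n" using assms(4) k j_def nth_mem by blast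
  define T' where "T' = T - {j0}"
  define R where "R = run n T sz st0 (take k L)"
  define R' where "R' = run n T' sz st0 (take k L)"
  have v1: "vals M s (Zw n M T (fst R))" "\<forall>p<n. p \<in> T \<longrightarrow> fst R p \<noteq> enat M"
    using vals_run[of L n sz M k T, OF assms(4,5,6) k] R_def s_def j_def by auto
  have v2: "\<forall>p<n. p \<in> T' \<longrightarrow> fst R' p \<noteq> enat M"
    using vals_run[of L n sz M k T', OF assms(4,5,6) k] R'_def by auto
  have IH: "Zw n M T' (fst R') = jump (Zw n M T (fst R)) j0"
    using Suc R_def R'_def T'_def by simp
  have s1: "run n T sz st0 (take (Suc k) L) = qstep n T s j R" using run_take_Suc[OF k] R_def s_def j_def by simp
  have s2: "run n T' sz st0 (take (Suc k) L) = qstep n T' s j R'" using run_take_Suc[OF k] R'_def s_def j_def by simp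
  have z0: "Zw n M T (fst R) ! j0 \<noteq> \<infinity>" using assms(1,2) by (simp add: Zw_nth)
  have "Zw n M T' (fst (qstep n T' s j R')) = upd M s j (Zw n M T' (fst R'))" using Zw_qstep[OF jn v2] .
  also have "\<dots> = upd M s j (jump (Zw n M T (fst R)) j0)" using IH by simp
  also have "\<dots> = jump (upd M s j (Zw n M T (fst R))) j0"
    using jump_upd[OF Zw_len _ v1(1) jn assms(1) z0] assms(6) s_def by simp
  also have "\<dots> = jump (Zw n M T (fst (qstep n T s j R))) j0" using Zw_qstep[OF jn v1(2)] by simp
  finally show ?case using s1 s2 T'_def by simp
qed


lemma chain_bound:
  assumes "vals M s Z" "s < M" "j0 < length Z" "Z ! j0 \<noteq> \<infinity>" "q < length Z" "Z ! q = enat M"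
  shows "jump_seq Z j0 k = Some c \<Longrightarrow> c < length Z \<and> Z ! c \<noteq> \<infinity> \<and> cd (length Z) j0 c \<le> cd (length Z) j0 q"
proof (induction k arbitrary: c)
  case 0 then show ?case using assms cd_self by simp
next
  case (Suc k)
  define n where "n = length Z"
  obtain c' where c': "jump_seq Z j0 k = Some c'" "next_jump Z c' = Some c" using jump_seq_SucD[OF Suc.prems] by blast
  have IH: "c' < n" "Z ! c' \<noteq> \<infinity>" "cd n j0 c' \<le> cd n j0 q" using Suc.IH[OF c'(1)] n_def by auto
  have cprop: "c < n" "Z ! c \<noteq> \<infinity>" "Z ! c' < Z ! c" using next_jump_SomeD[OF c'(2)] IH n_def by auto
  have c'M: "Z ! c' \<noteq> enat M" using nj_top[OF assms(1,2), of c'] c'(2) IH n_def by auto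
  have c'q: "c' \<noteq> q" using c'M assms(6) by auto
  have "Z ! c' < enat M" using vals_le[OF assms(1,2), of c'] IH c'M n_def by auto
  then have qg: "q \<in> gtset Z c'" using assms(6) by (simp add: gtset_def)
  have fc: "firstp n (gtset Z c') c' = Some c" using c'(2) next_jump_firstp[of c' Z] IH n_def by simp
  have "cd n c' c \<le> cd n c' q" using firstp_SomeD[OF fc IH(1)] qg assms(5) n_def by auto
  moreover have "cd n j0 q = cd n j0 c' + cd n c' q" using cd_add[OF _ IH(1) _ IH(3)] assms n_def by simp
  moreover have "cd n j0 q < n" using cd_lt[of n j0 q] assms(5) n_def by linarith
  ultimately have "cd n j0 c = cd n j0 c' + cd n c' c"
    using cd_add2[OF _ IH(1) cprop(1)] assms n_def by simp
  then show ?case using cprop \<open>cd n c' c \<le> cd n c' q\<close> \<open>cd n j0 q = cd n j0 c' + cd n c' q\<close> n_def by simp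
qed

lemma run_R1snd:
  assumes "set xs \<subseteq> {..<n}" "snd (run n T sz st0 xs) p \<noteq> \<infinity>"
  shows "\<exists>j\<in>set xs. snd (run n T sz st0 xs) p = enat (sz j)"
  using assms
proof (induction xs arbitrary: p rule: rev_induct)
  case Nil then show ?case by (simp add: run_nil st0_def)
next
  case (snoc j xs)
  have j: "j < n" using snoc.prems by auto
  have r: "run n T sz st0 (xs @ [j]) = qstep n T (sz j) j (run n T sz st0 xs)" by (rule run_snoc)
  show ?case
  proof (cases "snd (run n T sz st0 xs) p = \<infinity>")
    case True
    then show ?thesis using snoc.prems r j by (auto simp: qstep_alt split: if_splits)
  next
    case False
    then show ?thesis using snoc.IH[of p] snoc.prems r qstep_Q3[OF j False] by auto
  qed
qed

lemma reach_mono: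
  assumes "j < n" "\<forall>p<n. p \<in> B \<longrightarrow> p \<in> A" "reach n j (firstp n A j) p"
  shows "reach n j (firstp n B j) p"
proof (cases "firstp n B j")
  case None then show ?thesis using assms by (simp add: reach_def)
next
  case (Some g)
  have g: "g < n" "g \<in> A" using firstp_SomeD[OF Some assms(1)] assms(2) by auto
  then obtain f where f: "firstp n A j = Some f" using firstp_None[of n A j] by (cases "firstp n A j") auto
  have "cd n j f \<le> cd n j g" using firstp_SomeD[OF f assms(1)] g by auto
  then show ?thesis using assms(3) f Some by (simp add: reach_def)
qed


lemma run_persist:
  assumes "set L \<subseteq> {..<n}" "k \<le> length L" "fst (run n T sz st0 (take k L)) p \<noteq> \<infinity>"
  shows "fst (run n T sz st0 L) p = fst (run n T sz st0 (take k L)) p"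
proof -
  have "run n T sz st0 L = run n T sz (run n T sz st0 (take k L)) (drop k L)"
    using run_append[of n T sz st0 "take k L" "drop k L"] by simp
  moreover have "set (drop k L) \<subseteq> {..<n}" using assms(1) set_drop_subset by fastforce
  ultimately show ?thesis using run_R3 assms(3) by metis
qed

lemma inv_b:
  assumes a1: "j0 < n" and a2: "j0 \<in> T" and a3: "T \<subseteq> {..<n}" and a4: "set L \<subseteq> {..<n}"
    and a5: "\<And>a b. a \<le> b \<Longrightarrow> b < length L \<Longrightarrow> sz (L ! a) \<le> sz (L ! b)"
    and a6: "\<And>j. sz j < M" and a7: "\<And>j. sz j \<le> r"
    and a8: "d < n" and a9: "Zw n M T (fst (run n T sz st0 L)) ! ((j0 + d) mod n) = enat r"
    and a10: "\<forall>d'<d. Zw n M T (fst (run n T sz st0 L)) ! ((j0 + d') mod n) \<noteq> \<infinity>"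
    and a11: "k \<le> length L"
  shows "snd (run n (T - {j0}) sz st0 (take k L)) j0 = (if Zw n M T (fst (run n T sz st0 (take k L))) ! j0 = enat M then \<infinity> else Zw n M T (fst (run n T sz st0 (take k L))) ! j0)
   \<and> (\<forall>p<n. p \<notin> T \<longrightarrow> snd (run n (T - {j0}) sz st0 (take k L)) p = snd (run n T sz st0 (take k L)) p
        \<or> (snd (run n T sz st0 (take k L)) p = \<infinity> \<and> snd (run n (T - {j0}) sz st0 (take k L)) p = enat r))"
  using a11
proof (induction k)
  case 0
  show ?case using a1 a2 by (simp add: run_nil st0_def Zw_nth)
next
  case (Suc k)
  then have k: "k < length L" by simp
  define W where "W = Zw n M T (fst (run n T sz st0 L))"
  define pr where "pr = (j0 + d) mod n"
  have prn: "pr < n" "cd n j0 pr = d" using a1 a8 cd_of[OF a1 a8] by (auto simp: pr_def)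
  have Wpr: "W ! pr = enat r" using a9 W_def pr_def by simp
  have inT: "\<And>p. p < n \<Longrightarrow> cd n j0 p \<le> d \<Longrightarrow> p \<in> T"
  proof -
    fix p assume p: "p < n" "cd n j0 p \<le> d"
    have pe: "p = (j0 + cd n j0 p) mod n" using cd_inv[OF a1 p(1)] by simp
    have "W ! p \<noteq> \<infinity>"
    proof (cases "cd n j0 p < d")
      case True then show ?thesis using a10 pe W_def by metis
    next
      case False then have "cd n j0 p = d" using p by simp
      then show ?thesis using Wpr pe pr_def by simp
    qed
    then show "p \<in> T" using p W_def by (auto simp: Zw_nth split: if_splits)
  qed
  define j where "j = L ! k"
  define s where "s = sz j"
  have jn: "j < n" using a4 k j_def nth_mem by blast
  define T' where "T' = T - {j0}"
  define R where "R = run n T sz st0 (take k L)"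
  define R' where "R' = run n T' sz st0 (take k L)"
  define Z where "Z = Zw n M T (fst R)"
  define Y where "Y = Zw n M T' (fst R')"
  have v1: "vals M s Z" "\<forall>p<n. p \<in> T \<longrightarrow> fst R p \<noteq> enat M"
    using vals_run[of L n sz M k T, OF a4 a5 a6 k] R_def s_def j_def Z_def by auto
  have v2: "\<forall>p<n. p \<in> T' \<longrightarrow> fst R' p \<noteq> enat M"
    using vals_run[of L n sz M k T', OF a4 a5 a6 k] R'_def by auto
  have sM: "s < M" using a6 s_def by simp
  have sr: "s \<le> r" using a7 s_def by simp
  have YZ: "Y = jump Z j0" using inv_a[of j0 n T L sz M k, OF a1 a2 a3 a4 a5 a6] k Y_def Z_def R_def R'_def T'_def by simp
  have IH: "snd R' j0 = (if Z ! j0 = enat M then \<infinity> else Z ! j0)"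
     "\<forall>p<n. p \<notin> T \<longrightarrow> snd R' p = snd R p \<or> (snd R p = \<infinity> \<and> snd R' p = enat r)"
    using Suc k R_def R'_def Z_def T'_def by auto
  have s1: "run n T sz st0 (take (Suc k) L) = qstep n T s j R" using run_take_Suc[OF k] R_def s_def j_def by simp
  have s2: "run n T' sz st0 (take (Suc k) L) = qstep n T' s j R'" using run_take_Suc[OF k] R'_def s_def j_def by simp
  define MZ where "MZ = {p. Z ! p = enat M}"
  define MY where "MY = {p. p < n \<and> Y ! p = enat M}"
  have congZ: "\<forall>p<n. p \<in> freeset T (fst R) \<longleftrightarrow> p \<in> MZ"
    using v1(2) by (auto simp: Z_def MZ_def Zw_nth freeset_def)
  have congY: "\<forall>p<n. p \<in> freeset T' (fst R') \<longleftrightarrow> p \<in> MY"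
    using v2 by (auto simp: Y_def MY_def Zw_nth freeset_def)
  define F where "F = firstp n MZ j"
  define F' where "F' = firstp n MY j"
  have FF: "firstp n (freeset T (fst R)) j = F" using firstp_cong[OF congZ] F_def by simp
  have FF': "firstp n (freeset T' (fst R')) j = F'" using firstp_cong[OF congY] F'_def by simp
  have lenZ: "length Z = n" using Z_def by simp
  have MYZ: "MY \<subseteq> MZ" using Mset_jump_sub[OF v1(1) sM, of j0] a1 lenZ YZ by (auto simp: MY_def MZ_def)
  have new: "qstep n T s j R = (case F of None \<Rightarrow> fst R | Some f \<Rightarrow> (fst R)(f := enat s),
     \<lambda>p. if snd R p = \<infinity> \<and> reach n j F p then enat s else snd R p)"
    using qstep_alt[OF jn, of T s R] FF by simp
  have new': "qstep n T' s j R' = (case F' of None \<Rightarrow> fst R' | Some f \<Rightarrow> (fst R')(f := enat s),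
     \<lambda>p. if snd R' p = \<infinity> \<and> reach n j F' p then enat s else snd R' p)"
    using qstep_alt[OF jn, of T' s R'] FF' by simp
  have P1: "\<And>p. reach n j F p \<Longrightarrow> reach n j F' p"
    using reach_mono[OF jn, of MY MZ] MYZ F_def F'_def by auto
  have P2: "\<And>p. s < r \<Longrightarrow> p < n \<Longrightarrow> reach n j F' p \<Longrightarrow> \<not> reach n j F p \<Longrightarrow> p \<in> T"
  proof -
    fix p assume sr': "s < r" and p: "p < n" and rF': "reach n j F' p" and nrF: "\<not> reach n j F p"
    obtain f where Ff: "F = Some f" using nrF p by (cases F) (auto simp: reach_def)
    have f: "f < n" "Z ! f = enat M" "\<forall>q\<in>MZ. q < n \<longrightarrow> cd n j f \<le> cd n j q"
      using firstp_SomeD[OF Ff[unfolded F_def] jn] by (auto simp: MZ_def)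
    have fp: "cd n j f < cd n j p" using nrF Ff p by (auto simp: reach_def)
    have fY: "Y ! f \<noteq> enat M"
    proof
      assume "Y ! f = enat M"
      then have "f \<in> MY" using f by (simp add: MY_def)
      then have "F' = Some f" using firstp_sub[OF jn Ff[unfolded F_def] MYZ] F'_def by simp
      then show False using rF' fp by (simp add: reach_def)
    qed
    have "Y ! f \<noteq> Z ! f" using fY f by simp
    then have "f = j0 \<or> (\<exists>k. jump_seq Z j0 (Suc k) = Some f)" using jump_changed[of f Z j0] f lenZ YZ by simp
    then obtain k1 where k1: "jump_seq Z j0 k1 = Some f" by (metis jump_seq.simps(1))
    have Z0: "Z ! j0 \<noteq> \<infinity>" using a1 a2 by (simp add: Z_def Zw_nth)
    have prT: "pr \<in> T" using inT[OF prn(1)] prn(2) by simp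
    have Rpr: "fst R pr = \<infinity>"
    proof (rule ccontr)
      assume h: "fst R pr \<noteq> \<infinity>"
      have "fst (run n T sz st0 L) pr = fst R pr" using run_persist[OF a4 _ h[unfolded R_def]] k R_def by simp
      then have "W ! pr = Z ! pr" using prT prn h by (simp add: W_def Z_def Zw_nth)
      moreover have "Z ! pr \<noteq> enat M" using v1(2) prT prn h by (simp add: Z_def Zw_nth)
      moreover have "Z ! pr \<noteq> \<infinity>" using prT prn h by (simp add: Z_def Zw_nth)
      ultimately obtain v where "W ! pr = enat v" "v \<le> s" using v1(1) prn lenZ unfolding vals_def by auto
      then show False using Wpr sr' by simp
    qed
    have Zpr: "Z ! pr = enat M" using Rpr prT prn by (simp add: Z_def Zw_nth)
    have cb: "cd n j0 f \<le> d" using chain_bound[OF v1(1) sM _ Z0 _ Zpr k1] a1 prn lenZ by simp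
    have fT: "f \<in> T" using f by (simp add: Z_def Zw_nth split: if_splits)
    have fpr: "f \<noteq> pr"
    proof
      assume "f = pr"
      have "fst (qstep n T s j R) f = enat s" using new Ff by simp
      then have "fst (run n T sz st0 L) f = enat s"
        using run_persist[OF a4, of "Suc k" T sz f] s1 k by simp
      then have "W ! f = enat s" using fT f by (simp add: W_def Zw_nth)
      then show False using Wpr \<open>f = pr\<close> sr' by simp
    qed
    have Ypr: "Y ! pr = enat M"
    proof (rule ccontr)
      assume "Y ! pr \<noteq> enat M"
      then have "Y ! pr \<noteq> Z ! pr" using Zpr by simp
      then have "pr = j0 \<or> (\<exists>k. jump_seq Z j0 (Suc k) = Some pr)" using jump_changed[of pr Z j0] prn lenZ YZ by simp
      then obtain k2 where k2: "jump_seq Z j0 k2 = Some pr" by (metis jump_seq.simps(1))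
      have "k1 = k2" using jump_seq_inj[OF _ k1 k2] a1 lenZ f Zpr by simp
      then show False using k1 k2 fpr by simp
    qed
    then have prMY: "pr \<in> MY" using prn by (simp add: MY_def)
    then obtain f' where Ff': "F' = Some f'" using firstp_None[of n MY j] prn F'_def by (cases F') auto
    have f': "f' < n" "cd n j f' \<le> cd n j pr" using firstp_SomeD[OF Ff'[unfolded F'_def] jn] prMY prn by auto
    have pf': "cd n j p \<le> cd n j f'" using rF' Ff' by (simp add: reach_def)
    have prMZ: "pr \<in> MZ" using Zpr by (simp add: MZ_def)
    have e1: "cd n j p = cd n j f + cd n f p" using cd_add[OF jn f(1) p] fp by simp
    have e2: "cd n j pr = cd n j f + cd n f pr" using cd_add[OF jn f(1) prn(1)] f(3) prMZ prn by simp
    have e3: "cd n f p \<le> cd n f pr" using e1 e2 pf' f'(2) by simp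
    have e4: "cd n j0 pr = cd n j0 f + cd n f pr" using cd_add[OF a1 f(1) prn(1)] cb prn by simp
    have "cd n j0 p = cd n j0 f + cd n f p" using cd_add2[OF a1 f(1) p] e3 e4 prn a8 by simp
    then have "cd n j0 p \<le> d" using e3 e4 prn by simp
    then show "p \<in> T" using inT p by simp
  qed
  have Znew: "Zw n M T (fst (qstep n T s j R)) = upd M s j Z" using Zw_qstep[OF jn v1(2)] Z_def by simp
  have I3: "snd (qstep n T' s j R') j0 = (if Zw n M T (fst (qstep n T s j R)) ! j0 = enat M then \<infinity> else Zw n M T (fst (qstep n T s j R)) ! j0)"
  proof (cases "Z ! j0 = enat M")
    case True
    have R'j0: "snd R' j0 = \<infinity>" using IH(1) True by simp
    have j0MZ: "j0 \<in> MZ" using True by (simp add: MZ_def)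
    then obtain f where Ff: "F = Some f" using firstp_None[of n MZ j] a1 F_def by (cases F) auto
    have f: "f < n" "f \<in> MZ" "\<forall>q\<in>MZ. q < n \<longrightarrow> cd n j f \<le> cd n j q"
      using firstp_SomeD[OF Ff[unfolded F_def] jn] by auto
    show ?thesis
    proof (cases "f = j0")
      case True
      have "fst (qstep n T s j R) j0 = enat s" using new Ff True by simp
      then have zn: "Zw n M T (fst (qstep n T s j R)) ! j0 = enat s" using a1 a2 by (simp add: Zw_nth)
      have "reach n j F' j0"
      proof (cases F')
        case None then show ?thesis using a1 by (simp add: reach_def)
      next
        case (Some g)
        have "g \<in> MZ" "g < n" using firstp_SomeD[OF Some[unfolded F'_def] jn] MYZ by auto
        then show ?thesis using f True Some a1 by (simp add: reach_def)
      qed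
      then show ?thesis using new' R'j0 zn sM by simp
    next
      case False
      have "fst (qstep n T s j R) j0 = fst R j0" using new Ff False by simp
      moreover have "fst R j0 = \<infinity>" using True v1(2) a1 a2 by (auto simp: Z_def Zw_nth split: if_splits)
      ultimately have zn: "Zw n M T (fst (qstep n T s j R)) ! j0 = enat M" using a1 a2 by (simp add: Zw_nth)
      have "next_jump Z j0 = None" using nj_top[OF v1(1) sM] a1 lenZ True by simp
      then have "Y = Z[j0 := \<infinity>]" using jump_none[of j0 Z] a1 lenZ YZ by simp
      then have "Y ! f = enat M" using False f by (simp add: MZ_def)
      then have "f \<in> MY" using f by (simp add: MY_def)
      then have Ff': "F' = Some f" using firstp_sub[OF jn Ff[unfolded F_def] MYZ] F'_def by simp
      have "cd n j f \<le> cd n j j0" using f j0MZ a1 by auto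
      moreover have "cd n j f \<noteq> cd n j j0" using cd_inj[OF jn f(1) a1] False by auto
      ultimately have "\<not> reach n j F' j0" using Ff' by (simp add: reach_def)
      then show ?thesis using new' R'j0 zn by simp
    qed
  next
    case False
    have Rj0: "fst R j0 \<noteq> \<infinity>" using False a1 a2 by (simp add: Z_def Zw_nth split: if_splits)
    have "fst (qstep n T s j R) j0 = fst R j0" using qstep_Q2[OF jn Rj0] .
    then have zn: "Zw n M T (fst (qstep n T s j R)) ! j0 = Z ! j0" using a1 a2 by (simp add: Zw_nth Z_def)
    have "Z ! j0 \<noteq> \<infinity>" using Rj0 a1 a2 by (simp add: Z_def Zw_nth)
    then have "snd R' j0 \<noteq> \<infinity>" using IH(1) False by simp
    then have "snd (qstep n T' s j R') j0 = snd R' j0" using qstep_Q3[OF jn] by simp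
    then show ?thesis using zn IH(1) False by simp
  qed
  have I4: "\<forall>p<n. p \<notin> T \<longrightarrow> snd (qstep n T' s j R') p = snd (qstep n T s j R) p
        \<or> (snd (qstep n T s j R) p = \<infinity> \<and> snd (qstep n T' s j R') p = enat r)"
  proof (intro allI impI)
    fix p assume p: "p < n" "p \<notin> T"
    have disj: "snd R' p = snd R p \<or> (snd R p = \<infinity> \<and> snd R' p = enat r)" using IH(2) p by simp
    then consider (eq) "snd R' p = snd R p" | (ne) "snd R p = \<infinity>" "snd R' p = enat r"
      by (elim disjE conjE) auto
    then show "snd (qstep n T' s j R') p = snd (qstep n T s j R) p
        \<or> (snd (qstep n T s j R) p = \<infinity> \<and> snd (qstep n T' s j R') p = enat r)"
    proof cases
      case eq
      show ?thesis
      proof (cases "snd R p = \<infinity>")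
        case False
        have "snd (qstep n T s j R) p = snd R p" using qstep_Q3[OF jn False] .
        moreover have "snd (qstep n T' s j R') p = snd R' p" using qstep_Q3[OF jn] False eq by simp
        ultimately show ?thesis using eq by simp
      next
        case inf: True
        show ?thesis
        proof (cases "reach n j F p")
          case True then show ?thesis using P1[OF True] eq inf new new' by simp
        next
          case nr: False
          show ?thesis
          proof (cases "reach n j F' p")
            case False then show ?thesis using nr eq inf new new' by simp
          next
            case True
            have "\<not> s < r" using P2[OF _ p(1) True nr] p(2) by blast
            then have "s = r" using sr by simp
            then show ?thesis using True nr eq inf new new' by simp
          qed
        qed
      qed
    next
      case ne
      have sub: "set (take k L) \<subseteq> {..<n}" using a4 set_take_subset by fastforce
      obtain j' where j': "j' \<in> set (take k L)" "snd R' p = enat (sz j')"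
        using run_R1snd[OF sub, of T' sz p] ne R'_def by auto
      have "sz j' \<le> s" using in_take_le[of j' k L sz, OF j'(1) a5 k] s_def j_def by simp
      then have "s = r" using j' ne sr by simp
      then show ?thesis using ne new new' by simp
    qed
  qed
  show ?case using I3 I4 s1 s2 T'_def by simp
qed


lemma run_cong:
  assumes "\<forall>j\<in>set xs. sz j = sz' j"
  shows "run n T sz st xs = run n T sz' st xs"
  using assms by (induction xs arbitrary: st) (simp_all add: run_def)

definition bnd :: "enat list \<Rightarrow> nat \<Rightarrow> bool" where
  "bnd x i \<longleftrightarrow> (\<forall>p<length x. x ! p = \<infinity> \<or> (\<exists>v. x ! p = enat v \<and> v \<le> i))"

lemma entry_sorted:
  assumes "a \<le> b" "b < length (entry_order n x i)"
  shows "psize x i (entry_order n x i ! a) \<le> psize x i (entry_order n x i ! b)"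
proof -
  let ?f = "\<lambda>j. (psize x i j, j)"
  have s: "sorted (map ?f (entry_order n x i))" unfolding entry_order_def by (rule sorted_sort_key)
  have "map ?f (entry_order n x i) ! a \<le> map ?f (entry_order n x i) ! b"
    using sorted_nth_mono[OF s assms(1)] assms(2) by simp
  then show ?thesis using assms by (auto simp: less_eq_prod_def)
qed

lemma entry_set: "set (entry_order n x i) = {..<n}"
  by (simp add: entry_order_def lessThan_atLeast0)

lemma entry_len: "length (entry_order n x i) = n"
  by (simp add: entry_order_def)

lemma queue_out_len[simp]: "length (queue_out n T i x) = n"
  by (simp add: queue_out_def)

lemma psize_le: "bnd x i \<Longrightarrow> j < length x \<Longrightarrow> psize x i j \<le> i"
  unfolding bnd_def psize_def
  by (metis enat.simps(4) enat.simps(5) order_refl)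

context
  fixes n T i x j0
  assumes j0: "j0 < n" "j0 \<in> T" and Tn: "T \<subseteq> {..<n}" and lx: "length x = n" and bx: "bnd x i"
begin

definition "szq = (\<lambda>j. if j < n then psize x i j else 0)"
definition "Lq = entry_order n x i"

lemma qs_run: "queue_state n U i x = run n U szq st0 Lq"
proof -
  have "queue_state n U i x = run n U (psize x i) st0 Lq" by (simp add: queue_state_run Lq_def)
  also have "\<dots> = run n U szq st0 Lq" by (rule run_cong) (auto simp: szq_def Lq_def entry_set)
  finally show ?thesis .
qed

lemma Lq_sub: "set Lq \<subseteq> {..<n}" by (simp add: Lq_def entry_set)

lemma szq_sorted: "a \<le> b \<Longrightarrow> b < length Lq \<Longrightarrow> szq (Lq ! a) \<le> szq (Lq ! b)"
proof -
  assume ab: "a \<le> b" "b < length Lq"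
  have "Lq ! a \<in> set Lq" "Lq ! b \<in> set Lq" using ab by auto
  then have "Lq ! a < n" "Lq ! b < n" using Lq_sub by auto
  then show ?thesis using entry_sorted[of a b n x i] ab by (simp add: szq_def Lq_def)
qed

lemma szq_le: "szq j \<le> i"
  using psize_le[OF bx] lx by (simp add: szq_def)

lemma szq_lt: "szq j < Suc i"
  using szq_le le_imp_less_Suc by blast

lemma full:
  assumes "U \<subseteq> {..<n}"
  shows "\<forall>p\<in>U. fst (run n U szq st0 Lq) p \<noteq> \<infinity>"
proof -
  have "card (freeset U (fst (run n U szq st0 Lq))) = card (freeset U (fst st0)) - length Lq"
    using run_card[OF Lq_sub assms] .
  moreover have "card (freeset U (fst st0)) \<le> n"
    using card_mono[of "{..<n}" "freeset U (fst st0)"] assms by (auto simp: freeset_def)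
  moreover have "length Lq = n" by (simp add: Lq_def entry_len)
  ultimately have "card (freeset U (fst (run n U szq st0 Lq))) = 0" by simp
  moreover have "finite (freeset U (fst (run n U szq st0 Lq)))"
    by (rule finite_subset[of _ "{..<n}"]) (use assms in \<open>auto simp: freeset_def\<close>)
  ultimately show ?thesis by (auto simp: freeset_def)
qed

lemma Zw_out:
  assumes "U \<subseteq> {..<n}" "\<forall>p\<in>U. fst (run n U szq st0 Lq) p \<noteq> \<infinity>"
  shows "Zw n M U (fst (run n U szq st0 Lq)) = queue_out n U i x"
proof (rule nth_equalityI)
  fix p assume "p < length (Zw n M U (fst (run n U szq st0 Lq)))"
  then have p: "p < n" by simp
  show "Zw n M U (fst (run n U szq st0 Lq)) ! p = queue_out n U i x ! p"
    using assms p by (cases "p \<in> U") (auto simp: Zw_nth queue_out_def qs_run)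
qed simp

lemma queue_a: "queue_out n (T - {j0}) i x = jump (queue_out n T i x) j0"
proof -
  define M where "M = Suc i"
  have ia: "Zw n M (T - {j0}) (fst (run n (T - {j0}) szq st0 Lq)) = jump (Zw n M T (fst (run n T szq st0 Lq))) j0"
    using inv_a[of j0 n T Lq szq M "length Lq", OF j0 Tn Lq_sub szq_sorted] szq_lt M_def by simp
  have ZT: "Zw n M T (fst (run n T szq st0 Lq)) = queue_out n T i x" using Zw_out[OF Tn full[OF Tn]] .
  have ol: "\<And>p. p < n \<Longrightarrow> queue_out n T i x ! p = \<infinity> \<or> (\<exists>v. queue_out n T i x ! p = enat v \<and> v \<le> i)"
  proof -
    fix p assume pn: "p < n"
    show "queue_out n T i x ! p = \<infinity> \<or> (\<exists>v. queue_out n T i x ! p = enat v \<and> v \<le> i)"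
    proof (cases "p \<in> T")
      case False then show ?thesis using pn by (simp add: queue_out_def)
    next
      case True
      then have ne: "fst (run n T szq st0 Lq) p \<noteq> \<infinity>" using full[OF Tn] by blast
      obtain jj where "fst (run n T szq st0 Lq) p = enat (szq jj)" using run_R1[OF Lq_sub ne] by blast
      then have "queue_out n T i x ! p = enat (szq jj)" using pn True by (simp add: queue_out_def qs_run)
      then show ?thesis using szq_le[of jj] by blast
    qed
  qed
  have vq: "vals M i (queue_out n T i x)" unfolding vals_def using ol by fastforce
  have noM: "\<forall>p\<in>T - {j0}. fst (run n (T - {j0}) szq st0 Lq) p \<noteq> \<infinity>"
  proof (intro ballI notI)
    fix p assume p: "p \<in> T - {j0}" "fst (run n (T - {j0}) szq st0 Lq) p = \<infinity>"
    have pn: "p < n" using p Tn by auto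
    have "Zw n M (T - {j0}) (fst (run n (T - {j0}) szq st0 Lq)) ! p = enat M" using p pn by (simp add: Zw_nth)
    then have "jump (queue_out n T i x) j0 ! p = enat M" using ia ZT by simp
    then have "queue_out n T i x ! p = enat M" using jump_M[OF vq, of j0 p] M_def j0 pn by simp
    moreover have "queue_out n T i x ! p \<noteq> enat M" using ol[OF pn] M_def by auto
    ultimately show False by simp
  qed
  have "Zw n M (T - {j0}) (fst (run n (T - {j0}) szq st0 Lq)) = queue_out n (T - {j0}) i x"
    using Zw_out[OF _ noM] Tn by auto
  then show ?thesis using ia ZT by simp
qed

lemma queue_b:
  assumes "d < n" "queue_out n T i x ! ((j0 + d) mod n) = enat i"
    "\<forall>d'<d. queue_out n T i x ! ((j0 + d') mod n) \<noteq> \<infinity>"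
  shows "queue_weight n (T - {j0}) i x t = t (the_enat (queue_out n T i x ! j0)) * queue_weight n T i x t"
proof -
  define M where "M = Suc i"
  have ZT: "Zw n M T (fst (run n T szq st0 Lq)) = queue_out n T i x" using Zw_out[OF Tn full[OF Tn]] .
  have ib: "snd (run n (T - {j0}) szq st0 (take (length Lq) Lq)) j0 = (if Zw n M T (fst (run n T szq st0 (take (length Lq) Lq))) ! j0 = enat M then \<infinity> else Zw n M T (fst (run n T szq st0 (take (length Lq) Lq))) ! j0)
   \<and> (\<forall>p<n. p \<notin> T \<longrightarrow> snd (run n (T - {j0}) szq st0 (take (length Lq) Lq)) p = snd (run n T szq st0 (take (length Lq) Lq)) p
        \<or> (snd (run n T szq st0 (take (length Lq) Lq)) p = \<infinity> \<and> snd (run n (T - {j0}) szq st0 (take (length Lq) Lq)) p = enat i))"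
    by (rule inv_b[of j0 n T Lq szq M i d "length Lq", OF j0 Tn Lq_sub szq_sorted szq_lt[folded M_def] szq_le assms(1)])
       (use assms ZT in auto)
  have Zj0: "queue_out n T i x ! j0 \<noteq> enat M"
  proof -
    have "fst (run n T szq st0 Lq) j0 \<noteq> \<infinity>" using full[OF Tn] j0 by auto
    then obtain jj where "fst (run n T szq st0 Lq) j0 = enat (szq jj)" using run_R1[OF Lq_sub] by blast
    then have "Zw n M T (fst (run n T szq st0 Lq)) ! j0 = enat (szq jj)" using j0 by (simp add: Zw_nth)
    then show ?thesis using ZT szq_le[of jj] M_def by simp
  qed
  have fv0: "snd (queue_state n (T - {j0}) i x) j0 = queue_out n T i x ! j0"
    using ib ZT Zj0 by (simp add: qs_run)
  have vis: "\<And>p. p < n \<Longrightarrow> snd (run n T szq st0 Lq) p \<noteq> \<infinity>"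
    using run_R2[OF Lq_sub] by (simp add: Lq_def entry_set)
  have fvp: "\<And>p. p < n \<Longrightarrow> p \<notin> T \<Longrightarrow> snd (queue_state n (T - {j0}) i x) p = snd (queue_state n T i x) p"
    using ib vis by (auto simp: qs_run)
  have set: "{p. p < n \<and> p \<notin> T - {j0}} = insert j0 {p. p < n \<and> p \<notin> T}" using j0 by auto
  have "queue_weight n (T - {j0}) i x t = (\<Prod>p\<in>insert j0 {p. p < n \<and> p \<notin> T}. t (the_enat (snd (queue_state n (T - {j0}) i x) p)))"
    unfolding queue_weight_def set ..
  also have "\<dots> = t (the_enat (snd (queue_state n (T - {j0}) i x) j0)) * (\<Prod>p\<in>{p. p < n \<and> p \<notin> T}. t (the_enat (snd (queue_state n (T - {j0}) i x) p)))"
    by (rule prod.insert) (use j0 in auto)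
  also have "(\<Prod>p\<in>{p. p < n \<and> p \<notin> T}. t (the_enat (snd (queue_state n (T - {j0}) i x) p))) = queue_weight n T i x t"
    unfolding queue_weight_def by (rule prod.cong) (auto simp: fvp)
  finally show ?thesis using fv0 by simp
qed

end


lemma mlq_input_Suc:
  assumes "k < length Ts"
  shows "mlq_input n Ts (Suc k) = queue_out n (Ts ! k) (Suc k) (mlq_input n Ts k)"
proof -
  have u: "[1..<Suc (Suc k)] = [1..<Suc k] @ [Suc k]" by simp
  have t: "take (Suc k) Ts = take k Ts @ [Ts ! k]" using assms by (simp add: take_Suc_conv_app_nth)
  have l: "length [1..<Suc k] = length (take k Ts)" using assms by simp
  have "zip [1..<Suc (Suc k)] (take (Suc k) Ts) = zip [1..<Suc k] (take k Ts) @ [(Suc k, Ts ! k)]"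
    unfolding u t using zip_append[OF l] by simp
  then show ?thesis unfolding mlq_input_def by simp
qed

lemma mlq_input_len: "k \<le> length Ts \<Longrightarrow> length (mlq_input n Ts k) = n"
proof (induction k)
  case 0 then show ?case by (simp add: mlq_input_def)
next
  case (Suc k) then show ?case using mlq_input_Suc[of k Ts n] by simp
qed

lemma bnd_mono: "bnd x i \<Longrightarrow> i \<le> i' \<Longrightarrow> bnd x i'"
  unfolding bnd_def by force

lemma queue_out_bnd:
  assumes "bnd x i" "length x = n"
  shows "bnd (queue_out n T i x) i"
  unfolding bnd_def
proof (intro allI impI)
  fix p assume "p < length (queue_out n T i x)"
  then have p: "p < n" by simp
  show "queue_out n T i x ! p = \<infinity> \<or> (\<exists>v. queue_out n T i x ! p = enat v \<and> v \<le> i)"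
  proof (cases "p \<in> T \<and> fst (queue_state n T i x) p \<noteq> \<infinity>")
    case False then show ?thesis using p by (auto simp: queue_out_def)
  next
    case True
    have sub: "set (entry_order n x i) \<subseteq> {..<n}" by (simp add: entry_set)
    obtain jj where jj: "jj \<in> set (entry_order n x i)" "fst (queue_state n T i x) p = enat (psize x i jj)"
      using run_R1[OF sub] True unfolding queue_state_run by blast
    have "psize x i jj \<le> i" using psize_le[OF assms(1)] jj(1) assms(2) entry_set by auto
    then show ?thesis using jj True p by (simp add: queue_out_def)
  qed
qed

lemma mlq_input_bnd: "k \<le> length Ts \<Longrightarrow> bnd (mlq_input n Ts k) k"
proof (induction k)
  case 0 then show ?case by (simp add: mlq_input_def bnd_def)
next
  case (Suc k)
  then have k: "k < length Ts" by simp
  have "bnd (mlq_input n Ts k) (Suc k)" using Suc bnd_mono by simp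
  then show ?case using mlq_input_Suc[OF k] queue_out_bnd mlq_input_len[of k Ts n] k by simp
qed

theorem lemma5p2:
  fixes n r j0 :: nat and mp mq :: "nat list" and P Q :: "nat set list"
    and t :: "nat \<Rightarrow> 'a::comm_monoid_mult"
  assumes "is_mlq n mp P" and "is_mlq n mq Q"
    and "length P = r" and "length Q = r" and "1 \<le> r"
    and "\<forall>i < r - 1. P ! i = Q ! i"
    and "j0 < n"
    and "j0 \<in> P ! (r - 1)" and "j0 \<notin> Q ! (r - 1)"
    and "Q ! (r - 1) = P ! (r - 1) - {j0}"
  shows "mlq_word n Q = jump (mlq_word n P) j0
    \<and> ((\<exists>d < n. mlq_word n P ! ((j0 + d) mod n) = enat r
          \<and> (\<forall>d' < d. mlq_word n P ! ((j0 + d') mod n) \<noteq> \<infinity>))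
       \<longrightarrow> mlq_weight n Q t = t (the_enat (mlq_word n P ! j0)) * mlq_weight n P t)"
proof -
  define r' where "r' = r - 1"
  have rr: "r = Suc r'" using assms(5) r'_def by simp
  define T where "T = P ! r'"
  have Tn: "T \<subseteq> {..<n}" using assms(1,3) rr unfolding is_mlq_def T_def by auto
  have QT: "Q ! r' = T - {j0}" using assms(10) r'_def T_def by simp
  have j0T: "j0 \<in> T" using assms(8) r'_def T_def by simp
  have tk: "\<And>i. i \<le> r' \<Longrightarrow> take i P = take i Q"
  proof -
    fix i assume i: "i \<le> r'"
    show "take i P = take i Q"
    proof (rule nth_equalityI)
      show "length (take i P) = length (take i Q)" using assms(3,4) by simp
      fix k assume "k < length (take i P)"
      then have k: "k < i" using assms(3) by simp
      then have "k < r - 1" using i r'_def by simp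
      then have "P ! k = Q ! k" using assms(6) by blast
      then show "take i P ! k = take i Q ! k" using k by simp
    qed
  qed
  have inp: "\<And>i. i \<le> r' \<Longrightarrow> mlq_input n P i = mlq_input n Q i"
    using tk by (simp add: mlq_input_def)
  define x where "x = mlq_input n P r'"
  have lx: "length x = n" using mlq_input_len[of r' P n] assms(3) rr x_def by simp
  have bx: "bnd x r" using mlq_input_bnd[of r' P n] assms(3) rr x_def bnd_mono by simp
  have wP: "mlq_word n P = queue_out n T r x"
    using mlq_input_Suc[of r' P n] assms(3) rr x_def T_def by (simp add: mlq_word_def)
  have wQ: "mlq_word n Q = queue_out n (T - {j0}) r x"
    using mlq_input_Suc[of r' Q n] assms(4) rr x_def QT inp[of r'] by (simp add: mlq_word_def)
  have A: "mlq_word n Q = jump (mlq_word n P) j0"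
    using queue_a[OF assms(7) j0T Tn lx bx] wP wQ by simp
  have wtP: "mlq_weight n P t = (\<Prod>i<r'. queue_weight n (P ! i) (Suc i) (mlq_input n P i) t) * queue_weight n T r x t"
    unfolding mlq_weight_def assms(3) rr prod.lessThan_Suc T_def x_def ..
  have wtQ: "mlq_weight n Q t = (\<Prod>i<r'. queue_weight n (P ! i) (Suc i) (mlq_input n P i) t) * queue_weight n (T - {j0}) r x t"
  proof -
    have "(\<Prod>i<r'. queue_weight n (Q ! i) (Suc i) (mlq_input n Q i) t) = (\<Prod>i<r'. queue_weight n (P ! i) (Suc i) (mlq_input n P i) t)"
      by (rule prod.cong) (use assms(6) r'_def inp in auto)
    moreover have "queue_weight n (Q ! r') (Suc r') (mlq_input n Q r') t = queue_weight n (T - {j0}) r x t"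
      using QT inp[of r'] x_def rr by simp
    ultimately show ?thesis unfolding mlq_weight_def assms(4) rr prod.lessThan_Suc by simp
  qed
  have B: "(\<exists>d < n. mlq_word n P ! ((j0 + d) mod n) = enat r
          \<and> (\<forall>d' < d. mlq_word n P ! ((j0 + d') mod n) \<noteq> \<infinity>))
       \<longrightarrow> mlq_weight n Q t = t (the_enat (mlq_word n P ! j0)) * mlq_weight n P t"
  proof
    assume "\<exists>d < n. mlq_word n P ! ((j0 + d) mod n) = enat r
          \<and> (\<forall>d' < d. mlq_word n P ! ((j0 + d') mod n) \<noteq> \<infinity>)"
    then obtain d where d: "d < n" "queue_out n T r x ! ((j0 + d) mod n) = enat r"
      "\<forall>d' < d. queue_out n T r x ! ((j0 + d') mod n) \<noteq> \<infinity>" using wP by auto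
    have "queue_weight n (T - {j0}) r x t = t (the_enat (queue_out n T r x ! j0)) * queue_weight n T r x t"
      using queue_b[OF assms(7) j0T Tn lx bx d] .
    then show "mlq_weight n Q t = t (the_enat (mlq_word n P ! j0)) * mlq_weight n P t"
      using wtP wtQ wP by (simp add: ac_simps)
  qed
  show ?thesis using A B by blast
qed

end
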